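(* Let $\theta\in(0,\pi)$. For any $T_1,T_2>0$ with $T_1+T_2<2\theta$, there exists, up to isometry, a unique spherical bigon of angle $\theta$ with sides labeled $1,2$ such that side $i$ has total geodesic curvature $T_i$ for $i=1,2$.
   Context: A spherical bigon is the intersection $D_1\cap D_2$ of two open round disks in the unit sphere $\mathbb{S}^2$ of radii less than $\frac{\pi}{2}$, neither containing the other; side $i$ is its boundary arc on $\partial D_i$ and its angle is the interior angle at its corners. The total geodesic curvature of side $i$ is its length times its geodesic curvature $\cot r_i$, where $r_i$ is the radius of $D_i$. *)

theory Defs
  imports "HOL-Analysis.Analysis"
begin

definition S2 :: "(real^3) set" where
  "S2 = {x. norm x = 1}"

definition sdist :: "real^3 \<Rightarrow> real^3 \<Rightarrow> real" where
  "sdist x y = arccos (x \<bullet> y)"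

definition sdisk :: "real^3 \<Rightarrow> real \<Rightarrow> (real^3) set" where
  "sdisk c r = {x \<in> S2. sdist c x < r}"

definition is_bigon :: "real^3 \<Rightarrow> real \<Rightarrow> real^3 \<Rightarrow> real \<Rightarrow> bool" where
  "is_bigon c1 r1 c2 r2 \<longleftrightarrow>
     c1 \<in> S2 \<and> c2 \<in> S2 \<and> 0 < r1 \<and> r1 < pi/2 \<and> 0 < r2 \<and> r2 < pi/2 \<and>
     \<not> sdisk c1 r1 \<subseteq> sdisk c2 r2 \<and> \<not> sdisk c2 r2 \<subseteq> sdisk c1 r1 \<and>
     sdisk c1 r1 \<inter> sdisk c2 r2 \<noteq> {}"

definition bigon_side :: "real^3 \<Rightarrow> real \<Rightarrow> real^3 \<Rightarrow> real \<Rightarrow> (real^3) set" where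
  "bigon_side c r c' r' = {x \<in> S2. sdist c x = r \<and> sdist c' x \<le> r'}"

definition bigon_corners :: "real^3 \<Rightarrow> real \<Rightarrow> real^3 \<Rightarrow> real \<Rightarrow> (real^3) set" where
  "bigon_corners c1 r1 c2 r2 = {x \<in> S2. sdist c1 x = r1 \<and> sdist c2 x = r2}"

text \<open>Interior angle: at every corner p, the angle between the unit tangent vectors
  w1, w2 of side 1 and side 2 at p, pointing along the respective sides (w_i is tangent
  to S^2 at p, tangent to the circle \<partial>D_i, and points into the other disk D_j).\<close>
definition bigon_angle :: "real^3 \<Rightarrow> real \<Rightarrow> real^3 \<Rightarrow> real \<Rightarrow> real \<Rightarrow> bool" where
  "bigon_angle c1 r1 c2 r2 \<theta> \<longleftrightarrow>
     (\<forall>p \<in> bigon_corners c1 r1 c2 r2. \<forall>w1 w2.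
        norm w1 = 1 \<and> w1 \<bullet> p = 0 \<and> w1 \<bullet> c1 = 0 \<and> w1 \<bullet> c2 > 0 \<and>
        norm w2 = 1 \<and> w2 \<bullet> p = 0 \<and> w2 \<bullet> c2 = 0 \<and> w2 \<bullet> c1 > 0
        \<longrightarrow> arccos (w1 \<bullet> w2) = \<theta>)"

text \<open>Standard arclength parametrisation data of the circle of radius r about c:
  t \<mapsto> cos r c + sin r (cos t u + sin t v) has speed sin r.  The length of a subset A of
  this circle is sin r times the Lebesgue measure of the parameter set in [0,2pi).\<close>
definition circle_param :: "real^3 \<Rightarrow> real \<Rightarrow> real^3 \<Rightarrow> real^3 \<Rightarrow> real \<Rightarrow> real^3" where
  "circle_param c r u v t = cos r *\<^sub>R c + sin r *\<^sub>R (cos t *\<^sub>R u + sin t *\<^sub>R v)"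

definition circle_arc_length :: "real^3 \<Rightarrow> real \<Rightarrow> (real^3) set \<Rightarrow> real \<Rightarrow> bool" where
  "circle_arc_length c r A L \<longleftrightarrow>
     (\<forall>u v. norm u = 1 \<and> norm v = 1 \<and> u \<bullet> v = 0 \<and> u \<bullet> c = 0 \<and> v \<bullet> c = 0 \<longrightarrow>
        L = sin r * measure lborel {t \<in> {0..<2*pi}. circle_param c r u v t \<in> A})"

text \<open>Total geodesic curvature of the side on \<partial>D (disk (c,r); other disk (c',r')):
  length times the geodesic curvature cot r.\<close>
definition side_total_curvature :: "real^3 \<Rightarrow> real \<Rightarrow> real^3 \<Rightarrow> real \<Rightarrow> real \<Rightarrow> bool" where
  "side_total_curvature c r c' r' T \<longleftrightarrow>
     (\<exists>L. circle_arc_length c r (bigon_side c r c' r') L \<and> T = L * cot r)"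

end

theory Submission
  imports Defs
begin

unbundle cross3_syntax


definition acot :: "real \<Rightarrow> real" where "acot x = pi/2 - arctan x"

lemma acot_bounds: "0 < acot x" "acot x < pi"
  using arctan_bounded[of x] by (auto simp: acot_def)

lemma sin_acot: "sin (acot x) = 1 / sqrt (1 + x\<^sup>2)"
  by (simp add: acot_def sin_diff cos_arctan)

lemma cos_acot: "cos (acot x) = x / sqrt (1 + x\<^sup>2)"
  by (simp add: acot_def cos_diff sin_arctan)

lemma cot_acot: "cot (acot x) = x"
proof -
  have "sqrt (1 + x\<^sup>2) > 0" by (simp add: add_pos_nonneg)
  then show ?thesis by (simp add: cot_def sin_acot cos_acot)
qed

lemma acot_cot: assumes "0 < b" "b < pi" shows "acot (cot b) = b"
proof -
  have "cot b = tan (pi/2 - b)"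
    by (simp add: cot_def tan_def sin_diff cos_diff)
  then show ?thesis using assms by (simp add: acot_def arctan_tan)
qed

lemma acot_less_iff: "acot x < acot y \<longleftrightarrow> y < x"
  by (simp add: acot_def arctan_less_iff)

lemma acot_le_iff: "acot x \<le> acot y \<longleftrightarrow> y \<le> x"
  by (simp add: acot_def arctan_le_iff)

lemma continuous_on_acot [continuous_intros]:
  "continuous_on S f \<Longrightarrow> continuous_on S (\<lambda>x. acot (f x))"
  unfolding acot_def by (intro continuous_intros)

lemma sin_lt_x: fixes x :: real assumes "0 < x" shows "sin x < x"
proof (cases "x \<le> 1")
  case True
  have h: "sin (x/2) \<le> x/2" using sin_x_le_x[of "x/2"] assms by simp
  have s: "sin (x/2) > 0" using assms True pi_gt3 by (intro sin_gt_zero) auto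
  have c: "cos (x/2) < 1"
  proof -
    have "cos (x/2) \<noteq> 1"
    proof
      assume "cos (x/2) = 1"
      then have "sin (x/2) ^ 2 = 0" using sin_cos_squared_add[of "x/2"] by simp
      then show False using s by simp
    qed
    then show ?thesis using cos_le_one[of "x/2"] by linarith
  qed
  have "sin x = 2 * sin (x/2) * cos (x/2)"
    using sin_double[of "x/2"] by simp
  also have "\<dots> < 2 * (x/2) * 1"
  proof -
    have "sin (x/2) * cos (x/2) < sin (x/2) * 1" using s c by simp
    also have "\<dots> \<le> x/2" using h by simp
    finally show ?thesis by simp
  qed
  finally show ?thesis by simp
next
  case False
  then show ?thesis using sin_le_one[of x] by linarith
qed

lemma acot_gt_frac: "x / (1 + x\<^sup>2) < acot x"
proof -
  let ?b = "acot x"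
  have b: "0 < ?b" "?b < pi" by (rule acot_bounds)+
  have sq: "sqrt (1 + x\<^sup>2) > 0" by (simp add: add_pos_nonneg)
  have "x / (1 + x\<^sup>2) = sin ?b * cos ?b"
  proof -
    have "sqrt (1 + x\<^sup>2) * sqrt (1 + x\<^sup>2) = 1 + x\<^sup>2" by (simp add: add_pos_nonneg)
    then show ?thesis using sq by (simp add: sin_acot cos_acot)
  qed
  also have "\<dots> = sin (2 * ?b) / 2" by (simp add: sin_double)
  also have "\<dots> < (2 * ?b) / 2" using sin_lt_x[of "2 * ?b"] b by simp
  finally show ?thesis by simp
qed


definition Kc :: "real \<Rightarrow> real \<Rightarrow> real \<Rightarrow> real" where
  "Kc th a b = (sin a * cot b + cos a * cos th) / sin th"

definition Tf :: "real \<Rightarrow> real \<Rightarrow> real \<Rightarrow> real" where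
  "Tf th a b = 2 * cos a * acot (Kc th a b)"

lemma Tf_mono2:
  assumes th: "0 < th" "th < pi" and a: "0 < a" "a < pi/2"
    and b: "0 < b" "b < b'" "b' < pi/2"
  shows "Tf th a b < Tf th a b'"
proof -
  have sb: "0 < sin b" "0 < sin b'" using b by (auto intro!: sin_gt_zero)
  have "cos b' < cos b" using b by (intro cos_monotone_0_pi) auto
  moreover have "sin b < sin b'" using b by (intro sin_monotone_2pi) auto
  moreover have "0 < cos b'" using b by (intro cos_gt_zero) auto
  ultimately have "cos b' / sin b' < cos b / sin b" using sb
    by (simp add: frac_less2)
  then have "cot b' < cot b" by (simp add: cot_def)
  moreover have "0 < sin a" using a by (intro sin_gt_zero) auto
  moreover have "0 < sin th" using th by (intro sin_gt_zero) auto
  ultimately have "Kc th a b' < Kc th a b"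
    by (simp add: Kc_def divide_strict_right_mono)
  then have "acot (Kc th a b) < acot (Kc th a b')" by (simp add: acot_less_iff)
  moreover have "0 < cos a" using a by (intro cos_gt_zero) auto
  ultimately show ?thesis by (simp add: Tf_def)
qed


lemma XYK_identity:
  fixes a b th :: real
  shows "(sin a * cos b + cos a * sin b * cos th)\<^sup>2 + (sin b * sin th)\<^sup>2
        + (cos a * cos b - cos th * sin a * sin b)\<^sup>2 = 1"
proof -
  have e1: "sin a ^2 = 1 - cos a ^2" "sin b ^2 = 1 - cos b ^2" "sin th ^2 = 1 - cos th ^2"
    by (simp_all add: sin_squared_eq)
  show ?thesis unfolding power2_eq_square
    using e1 unfolding power2_eq_square by algebra
qed

lemma Kc_eq: assumes "sin b \<noteq> 0" "sin th \<noteq> 0"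
  shows "Kc th a b = (sin a * cos b + cos a * sin b * cos th) / (sin b * sin th)"
  using assms by (simp add: Kc_def cot_def field_simps)

lemma acot_gt_sin: "1 / sqrt (1 + x\<^sup>2) < acot x"
  using sin_lt_x[OF acot_bounds(1)[of x]] by (simp add: sin_acot)

lemma Tf_deriv1:
  assumes th: "0 < th" "th < pi" and b: "0 < b" "b < pi/2" and x: "0 < x" "x < pi/2"
  shows "\<exists>y. ((\<lambda>x. Tf th x b) has_real_derivative y) (at x) \<and> y < 0"
proof -
  define k where "k = Kc th x b"
  define k' where "k' = (cos x * cot b - sin x * cos th) / sin th"
  have sth: "sin th > 0" using th by (intro sin_gt_zero) auto
  have sb: "sin b > 0" using b by (intro sin_gt_zero) auto
  have sx: "sin x > 0" using x by (intro sin_gt_zero) auto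
  have cx: "cos x > 0" using x by (intro cos_gt_zero) auto
  have cb: "cos b > 0" using b by (intro cos_gt_zero) auto
  have g: "((\<lambda>x. Kc th x b) has_real_derivative k') (at x)"
    unfolding Kc_def k'_def using sth
    by (auto intro!: derivative_eq_intros simp: field_simps)
  have ga: "((\<lambda>x. arctan (Kc th x b)) has_real_derivative inverse (1 + k\<^sup>2) * k') (at x)"
    using DERIV_chain2[OF DERIV_arctan g] by (simp add: k_def)
  have D: "((\<lambda>x. Tf th x b) has_real_derivative
      (-2 * sin x * acot k + 2 * cos x * (- (k' / (1 + k\<^sup>2))))) (at x)"
    unfolding Tf_def acot_def k_def
    by (rule derivative_eq_intros ga refl | simp)+ (simp add: field_simps k_def)
  define X where "X = sin x * cos b + cos x * sin b * cos th"
  define Y where "Y = sin b * sin th"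
  define K where "K = cos x * cos b - cos th * sin x * sin b"
  have Yp: "Y > 0" using sb sth by (simp add: Y_def)
  have id: "X\<^sup>2 + Y\<^sup>2 + K\<^sup>2 = 1" unfolding X_def Y_def K_def by (rule XYK_identity)
  have kX: "k = X / Y" using sb sth by (simp add: k_def X_def Y_def Kc_eq)
  have kK: "k' = K / Y" using sb sth
    by (simp add: k'_def K_def Y_def cot_def field_simps)
  have one: "1 + k\<^sup>2 = (1 - K\<^sup>2) / Y\<^sup>2" using Yp id
    by (simp add: kX field_simps power2_eq_square) 
  have K1: "1 - K\<^sup>2 > 0"
  proof -
    have "Y\<^sup>2 > 0" using Yp by simp
    moreover have "X\<^sup>2 \<ge> 0" by simp
    ultimately show ?thesis using id by linarith
  qed
  have sq: "sqrt (1 + k\<^sup>2) = sqrt (1 - K\<^sup>2) / Y"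
    using Yp by (simp add: one real_sqrt_divide)
  have Kgt: "K > - sin x"
  proof -
    have "sin x * sin b * cos th \<le> sin x * sin b" using sx sb cos_le_one[of th]
      by (simp add: mult_left_le)
    moreover have "sin x * sin b < sin x"
    proof -
      have "(sin b)\<^sup>2 < 1" using cb by (simp add: sin_squared_eq)
      then have "sin b < 1" by (smt (verit) one_le_power)
      then show ?thesis using sx by simp
    qed
    ultimately show ?thesis using cx cb unfolding K_def
      by (smt (verit) mult_pos_pos mult.commute mult.left_commute)
  qed
  have key: "sin x * sqrt (1 - K\<^sup>2) + cos x * K \<ge> 0"
  proof (cases "K \<ge> 0")
    case True then show ?thesis using sx cx K1 by simp
  next
    case False
    have "K\<^sup>2 < (sin x)\<^sup>2" using False Kgt sx
      by (smt (verit) power2_less_imp_less abs_le_square_iff abs_of_neg abs_of_pos)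
    then have "(cos x * K)\<^sup>2 \<le> (sin x * sqrt (1 - K\<^sup>2))\<^sup>2"
      using K1 by (simp add: power_mult_distrib sin_squared_eq algebra_simps)
    then have "\<bar>cos x * K\<bar> \<le> \<bar>sin x * sqrt (1 - K\<^sup>2)\<bar>" by (simp only: abs_le_square_iff)
    then show ?thesis using sx K1 by (smt (verit) abs_of_nonneg real_sqrt_ge_zero mult_nonneg_nonneg)
  qed
  have "sin x * (1 / sqrt (1 + k\<^sup>2)) + cos x * (k' / (1 + k\<^sup>2)) \<ge> 0"
  proof -
    have "sin x * (1 / sqrt (1 + k\<^sup>2)) + cos x * (k' / (1 + k\<^sup>2))
        = (sin x * sqrt (1 - K\<^sup>2) + cos x * K) * (Y / (1 - K\<^sup>2))"
    proof -
      have s0: "sqrt (1 - K\<^sup>2) > 0" using K1 by simp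
      have "sqrt (1 - K\<^sup>2) * sqrt (1 - K\<^sup>2) = 1 - K\<^sup>2" using K1 by simp
      then show ?thesis using s0 Yp K1 unfolding sq unfolding one kK
        by (simp add: field_simps power2_eq_square)
    qed
    also have "\<dots> \<ge> 0" using key Yp K1 by simp
    finally show ?thesis .
  qed
  moreover have "sin x * (1 / sqrt (1 + k\<^sup>2)) < sin x * acot k"
    using mult_strict_left_mono[OF acot_gt_sin[of k] sx] by simp
  ultimately have "-2 * sin x * acot k + 2 * cos x * (- (k' / (1 + k\<^sup>2))) < 0" by linarith
  then show ?thesis using D by blast
qed


lemma Sf_deriv1:
  assumes th: "0 < th" "th < pi" and b: "0 < b" "b < pi/2" and x: "0 < x" "x < pi/2"
  shows "\<exists>y. ((\<lambda>x. Tf th x b + Tf th b x) has_real_derivative y) (at x) \<and> y < 0"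
proof -
  define k where "k = Kc th x b"
  define k' where "k' = (cos x * cot b - sin x * cos th) / sin th"
  define m where "m = Kc th b x"
  define m' where "m' = - sin b / ((sin x)\<^sup>2 * sin th)"
  have sth: "sin th > 0" using th by (intro sin_gt_zero) auto
  have sb: "sin b > 0" using b by (intro sin_gt_zero) auto
  have sx: "sin x > 0" using x by (intro sin_gt_zero) auto
  have cx: "cos x > 0" using x by (intro cos_gt_zero) auto
  have cb: "cos b > 0" using b by (intro cos_gt_zero) auto
  have g: "((\<lambda>x. Kc th x b) has_real_derivative k') (at x)"
    unfolding Kc_def k'_def using sth
    by (auto intro!: derivative_eq_intros simp: field_simps)
  have ga: "((\<lambda>x. arctan (Kc th x b)) has_real_derivative inverse (1 + k\<^sup>2) * k') (at x)"
    using DERIV_chain2[OF DERIV_arctan g] by (simp add: k_def)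
  have h: "((\<lambda>x. Kc th b x) has_real_derivative m') (at x)"
  proof -
    have c: "(cot has_real_derivative - inverse ((sin x)\<^sup>2)) (at x)" using sx by simp
    show ?thesis
    unfolding Kc_def m'_def using sth sx
    by (auto intro!: derivative_eq_intros c simp: field_simps)
  qed
  have ha: "((\<lambda>x. arctan (Kc th b x)) has_real_derivative inverse (1 + m\<^sup>2) * m') (at x)"
    using DERIV_chain2[OF DERIV_arctan h] by (simp add: m_def)
  have D: "((\<lambda>x. Tf th x b + Tf th b x) has_real_derivative
      (-2 * sin x * acot k + 2 * cos x * (- (k' / (1 + k\<^sup>2))) + 2 * cos b * (- (m' / (1 + m\<^sup>2))))) (at x)"
    unfolding Tf_def acot_def k_def m_def
    by (rule derivative_eq_intros ga ha refl | simp)+ (simp add: field_simps k_def m_def)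
  define X where "X = sin x * cos b + cos x * sin b * cos th"
  define Y where "Y = sin b * sin th"
  define X2 where "X2 = sin b * cos x + cos b * sin x * cos th"
  define Y2 where "Y2 = sin x * sin th"
  define K where "K = cos x * cos b - cos th * sin x * sin b"
  have Yp: "Y > 0" using sb sth by (simp add: Y_def)
  have Y2p: "Y2 > 0" using sx sth by (simp add: Y2_def)
  have id: "X\<^sup>2 + Y\<^sup>2 + K\<^sup>2 = 1" unfolding X_def Y_def K_def by (rule XYK_identity)
  have id2: "X2\<^sup>2 + Y2\<^sup>2 + K\<^sup>2 = 1"
  proof -
    have "X2\<^sup>2 + Y2\<^sup>2 + (cos b * cos x - cos th * sin b * sin x)\<^sup>2 = 1"
      unfolding X2_def Y2_def by (rule XYK_identity)
    then show ?thesis by (simp add: K_def algebra_simps)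
  qed
  have kX: "k = X / Y" using sb sth by (simp add: k_def X_def Y_def Kc_eq)
  have mX: "m = X2 / Y2" using sx sth by (simp add: m_def X2_def Y2_def Kc_eq)
  have kK: "k' = K / Y" using sb sth
    by (simp add: k'_def K_def Y_def cot_def field_simps)
  have K1: "1 - K\<^sup>2 > 0"
  proof -
    have "Y\<^sup>2 > 0" using Yp by simp
    moreover have "X\<^sup>2 \<ge> 0" by simp
    ultimately show ?thesis using id by linarith
  qed
  have one: "1 + k\<^sup>2 = (1 - K\<^sup>2) / Y\<^sup>2" using Yp id
    by (simp add: kX field_simps power2_eq_square) 
  have one2: "1 + m\<^sup>2 = (1 - K\<^sup>2) / Y2\<^sup>2" using Y2p id2
    by (simp add: mX field_simps power2_eq_square) 
  have cross: "cos b - cos x * K = sin x * X"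
  proof -
    have "cos x * cos x + sin x * sin x = 1" using sin_cos_squared_add3[of x] by simp
    then have "cos b = cos b * (cos x * cos x) + cos b * (sin x * sin x)"
      by (metis distrib_left mult.right_neutral)
    then show ?thesis unfolding K_def X_def by (simp add: algebra_simps)
  qed
  have "2 * cos x * (- (k' / (1 + k\<^sup>2))) + 2 * cos b * (- (m' / (1 + m\<^sup>2)))
      = 2 * sin x * (k / (1 + k\<^sup>2))"
  proof -
    define L where "L = 1 - K\<^sup>2"
    have Lp: "L > 0" using K1 by (simp add: L_def)
    have t1: "k' / (1 + k\<^sup>2) = K * Y / L"
      unfolding one kK L_def[symmetric] using Yp Lp by (simp add: field_simps power2_eq_square)
    have t2: "m' / (1 + m\<^sup>2) = - sin b * sin th / L"
      unfolding one2 m'_def L_def[symmetric] using Y2p Lp sx sth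
      by (simp add: Y2_def field_simps power2_eq_square)
    have t3: "k / (1 + k\<^sup>2) = X * Y / L"
      unfolding one L_def[symmetric] unfolding kX using Yp Lp by (simp add: field_simps power2_eq_square)
    have "2 * cos x * (- (k' / (1 + k\<^sup>2))) + 2 * cos b * (- (m' / (1 + m\<^sup>2)))
        = 2 * sin b * sin th * (cos b - cos x * K) / L"
      unfolding t1 t2 using Lp by (simp add: Y_def field_simps)
    also have "\<dots> = 2 * sin x * (k / (1 + k\<^sup>2))"
      unfolding cross t3 using Lp by (simp add: Y_def field_simps)
    finally show ?thesis .
  qed
  then have "-2 * sin x * acot k + 2 * cos x * (- (k' / (1 + k\<^sup>2))) + 2 * cos b * (- (m' / (1 + m\<^sup>2)))
      = 2 * sin x * (k / (1 + k\<^sup>2) - acot k)" by (simp add: algebra_simps)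
  also have "\<dots> < 0" using acot_gt_frac[of k] sx by (simp add: mult_pos_neg)
  finally show ?thesis using D by blast
qed


lemma Tf_mono1:
  assumes th: "0 < th" "th < pi" and b: "0 < b" "b < pi/2" and a: "0 < a" "a < a'" "a' < pi/2"
  shows "Tf th a' b < Tf th a b"
  by (rule DERIV_neg_imp_decreasing[OF a(2)]) (rule Tf_deriv1[OF th b], use a in auto)

lemma Sf_mono1:
  assumes th: "0 < th" "th < pi" and b: "0 < b" "b < pi/2" and a: "0 < a" "a < a'" "a' < pi/2"
  shows "Tf th a' b + Tf th b a' < Tf th a b + Tf th b a"
  using DERIV_neg_imp_decreasing[OF a(2), of "\<lambda>x. Tf th x b + Tf th b x"]
    Sf_deriv1[OF th b] a by auto

lemma Tf_unique_aux:
  assumes th: "0 < th" "th < pi"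
    and r: "0 < s1" "s1 < pi/2" "0 < s2" "s2 < pi/2" "0 < t1" "t1 < pi/2" "0 < t2" "t2 < pi/2"
    and le: "s1 \<le> t1"
    and e1: "Tf th s1 s2 = Tf th t1 t2" and e2: "Tf th s2 s1 = Tf th t2 t1"
  shows "s1 = t1 \<and> s2 = t2"
proof (cases "t2 \<le> s2")
  case True
  have A: "Tf th t1 s2 \<le> Tf th s1 s2"
    using le Tf_mono1[OF th r(3,4) r(1) _ r(6)] by (cases "s1 = t1") force+
  have B: "Tf th t1 t2 \<le> Tf th t1 s2"
    using True Tf_mono2[OF th r(5,6) r(7) _ r(4)] by (cases "t2 = s2") force+
  have "s1 = t1"
  proof (rule ccontr)
    assume "s1 \<noteq> t1"
    then have "Tf th t1 s2 < Tf th s1 s2" using le Tf_mono1[OF th r(3,4) r(1) _ r(6)] by simp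
    then show False using B e1 by simp
  qed
  moreover have "s2 = t2"
  proof (rule ccontr)
    assume "s2 \<noteq> t2"
    then have "Tf th t1 t2 < Tf th t1 s2" using True Tf_mono2[OF th r(5,6) r(7) _ r(4)] by simp
    then show False using A e1 by simp
  qed
  ultimately show ?thesis ..
next
  case False
  have "Tf th t2 s1 + Tf th s1 t2 < Tf th s2 s1 + Tf th s1 s2"
    using Sf_mono1[OF th r(1,2) r(3) _ r(8)] False by simp
  moreover have "Tf th t1 t2 + Tf th t2 t1 \<le> Tf th s1 t2 + Tf th t2 s1"
    using le Sf_mono1[OF th r(7,8) r(1) _ r(6)] by (cases "s1 = t1") force+
  ultimately show ?thesis using e1 e2 by simp
qed

lemma Tf_unique:
  assumes th: "0 < th" "th < pi"
    and r: "0 < s1" "s1 < pi/2" "0 < s2" "s2 < pi/2" "0 < t1" "t1 < pi/2" "0 < t2" "t2 < pi/2"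
    and e1: "Tf th s1 s2 = Tf th t1 t2" and e2: "Tf th s2 s1 = Tf th t2 t1"
  shows "s1 = t1 \<and> s2 = t2"
proof (cases "s1 \<le> t1")
  case True show ?thesis using Tf_unique_aux[OF th r True e1 e2] .
next
  case False
  then have "t1 \<le> s1" by simp
  from Tf_unique_aux[OF th r(5-8) r(1-4) this e1[symmetric] e2[symmetric]] show ?thesis by simp
qed


lemma Tf_exists:
  assumes th: "0 < th" "th < pi" and T: "0 < T1" "0 < T2" "T1 + T2 < 2 * th"
  shows "\<exists>r1 r2. 0 < r1 \<and> r1 < pi/2 \<and> 0 < r2 \<and> r2 < pi/2 \<and>
           Tf th r1 r2 = T1 \<and> Tf th r2 r1 = T2"
proof -
  define x where "x = T1 / 2"
  have x: "0 < x" "x < th" using T by (auto simp: x_def)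
  have sth: "sin th > 0" using th by (intro sin_gt_zero) auto
  define be where "be = (\<lambda>r::real. x / cos r)"
  define ka where "ka = (\<lambda>r. sin th * cot (be r) - cos r * cos th)"
  define D where "D = (\<lambda>r. sqrt ((sin r)\<^sup>2 + (ka r)\<^sup>2))"
  define Phi where "Phi = (\<lambda>r. 2 * (ka r / D r) * acot ((cos r + ka r * cos th) / (D r * sin th)))"
  define Bs where "Bs = acot (min (- 2 / sin th) (cot ((x + pi) / 2)))"
  have Bs1: "(x + pi) / 2 \<le> Bs"
  proof -
    have "acot (cot ((x + pi) / 2)) = (x + pi) / 2" using x th by (intro acot_cot) auto
    moreover have "acot (cot ((x + pi) / 2)) \<le> Bs" unfolding Bs_def by (simp add: acot_le_iff)
    ultimately show ?thesis by simp
  qed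
  have Bs2: "Bs < pi" "0 < Bs" unfolding Bs_def by (rule acot_bounds)+
  have Bs3: "cot Bs \<le> - 2 / sin th" unfolding Bs_def cot_acot by simp
  have "x < (x + pi) / 2" using x th by simp
  then have xBs: "x < Bs" using Bs1 by linarith
  define rh where "rh = arccos (x / Bs)"
  have xB01: "0 < x / Bs" "x / Bs < 1" using x xBs Bs2 by auto
  have rh: "0 < rh" "rh < pi/2"
    unfolding rh_def using xB01 arccos_lt_bounded[of "x/Bs"] arccos_le_pi2[of "x/Bs"]
      arccos_less_arccos[of 0 "x/Bs"]  by auto
  have cosrh: "cos rh = x / Bs" unfolding rh_def using xB01 by simp
  have rng: "x \<le> be r \<and> be r \<le> Bs \<and> cos r > 0" if "0 \<le> r" "r \<le> rh" for r
  proof -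
    have c: "cos rh \<le> cos r" using that rh by (intro cos_monotone_0_pi_le) auto
    have cp: "cos r > 0" using c cosrh xB01 by linarith
    have "cos r \<le> 1" by simp
    then have "x \<le> x / cos r" using cp x by (simp add: le_divide_eq)
    moreover have "x / cos r \<le> Bs"
      using c cosrh cp Bs2 by (simp add: divide_le_eq field_simps)
    ultimately show ?thesis using cp by (simp add: be_def)
  qed
  have sbe: "sin (be r) > 0" if "0 \<le> r" "r \<le> rh" for r
    using rng[OF that] x Bs2 by (intro sin_gt_zero) auto
  have ka0: "ka 0 = sin (th - x) / sin x"
  proof -
    have "sin x > 0" using x th by (intro sin_gt_zero) auto
    then show ?thesis unfolding ka_def be_def
      by (simp add: cot_def sin_diff field_simps)
  qed
  have ka0p: "ka 0 > 0"
  proof -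
    have "sin x > 0" using x th by (intro sin_gt_zero) auto
    moreover have "sin (th - x) > 0" using x th by (intro sin_gt_zero) auto
    ultimately show ?thesis by (simp add: ka0)
  qed
  have Dp: "D r > 0" if "0 \<le> r" "r \<le> rh" for r
  proof (cases "r = 0")
    case True then show ?thesis using ka0p by (simp add: D_def)
  next
    case False
    then have "sin r > 0" using that rh by (intro sin_gt_zero) auto
    then have "(sin r)\<^sup>2 + (ka r)\<^sup>2 > 0" by (simp add: add_pos_nonneg)
    then show ?thesis by (simp add: D_def)
  qed
  have cont: "continuous_on {0..rh} Phi"
  proof -
    have c1: "continuous_on {0..rh} be" unfolding be_def
      using rng by (intro continuous_intros) force
    have c2: "continuous_on {0..rh} ka" unfolding ka_def cot_def
      using sbe by (intro continuous_intros c1) (force simp: be_def)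
    have c3: "continuous_on {0..rh} D" unfolding D_def by (intro continuous_intros c2)
    show ?thesis unfolding Phi_def using Dp sth
      by (intro continuous_intros c2 c3) force+
  qed
  have Phi0: "Phi 0 = 2 * th - T1"
  proof -
    have D0: "D 0 = ka 0" using ka0p by (simp add: D_def)
    have sx: "sin x > 0" using x th by (intro sin_gt_zero) auto
    have stx: "sin (th - x) > 0" using x th by (intro sin_gt_zero) auto
    have "(cos 0 + ka 0 * cos th) / (D 0 * sin th) = cot (th - x)"
    proof -
      have "sin x = sin th * cos (th - x) - cos th * sin (th - x)"
        using sin_diff[of th "th - x"] by simp
      then show ?thesis unfolding D0 ka0 using sx stx sth
        by (simp add: cot_def field_simps)
    qed
    moreover have "acot (cot (th - x)) = th - x" using x th by (intro acot_cot) auto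
    ultimately show ?thesis unfolding Phi_def using D0 ka0p by (simp add: x_def)
  qed
  have Phirh: "Phi rh < 0"
  proof -
    have "ka rh < 0"
    proof -
      have "be rh = Bs" unfolding be_def using cosrh xB01 x by simp
      then have "sin th * cot (be rh) \<le> -2" using Bs3 sth by (simp add: field_simps)
      moreover have "- (cos rh * cos th) \<le> 1"
      proof -
        have "\<bar>cos rh * cos th\<bar> \<le> 1" by (simp add: abs_mult mult_le_one)
        then show ?thesis by linarith
      qed
      ultimately show ?thesis unfolding ka_def by linarith
    qed
    moreover have "D rh > 0" using Dp rh by simp
    moreover have "acot ((cos rh + ka rh * cos th) / (D rh * sin th)) > 0" by (rule acot_bounds)
    ultimately show ?thesis unfolding Phi_def by (simp add: mult_neg_pos divide_neg_pos)
  qed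
  obtain r where r: "0 \<le> r" "r \<le> rh" "Phi r = T2"
    using IVT2'[of Phi rh T2 0] cont Phirh Phi0 T rh by force
  have r0: "r \<noteq> 0" using r Phi0 T by auto
  have rpos: "0 < r" using r r0 by simp
  have sr: "sin r > 0" using rpos r rh by (intro sin_gt_zero) auto
  have cr: "cos r > 0" using rng r by simp
  have Dr: "D r > 0" using Dp r by simp
  have kap: "ka r > 0"
  proof (rule ccontr)
    assume "\<not> ka r > 0"
    then have "ka r / D r \<le> 0" using Dr by (simp add: divide_nonpos_pos)
    moreover have "acot ((cos r + ka r * cos th) / (D r * sin th)) \<ge> 0"
      using acot_bounds(1) by (rule order_less_imp_le)
    ultimately have "Phi r \<le> 0" unfolding Phi_def
      by (metis mult_nonpos_nonneg mult_nonneg_nonpos zero_le_numeral mult.assoc)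
    then show False using r T by simp
  qed
  define r2 where "r2 = acot (ka r / sin r)"
  have r2: "0 < r2" "r2 < pi/2"
    unfolding r2_def acot_def using kap sr arctan_bounded[of "ka r / sin r"]
    by (auto simp: arctan_less_iff[of 0, simplified])
  have cotr2: "cot r2 = ka r / sin r" unfolding r2_def by (rule cot_acot)
  have sq: "sqrt (1 + (ka r / sin r)\<^sup>2) = D r / sin r"
  proof -
    have "1 + (ka r / sin r)\<^sup>2 = ((sin r)\<^sup>2 + (ka r)\<^sup>2) / (sin r)\<^sup>2"
      using sr by (simp add: field_simps)
    then show ?thesis using sr by (simp add: D_def real_sqrt_divide)
  qed
  have sinr2: "sin r2 = sin r / D r" unfolding r2_def sin_acot sq using sr Dr by simp
  have cosr2: "cos r2 = ka r / D r" unfolding r2_def cos_acot sq using sr Dr by simp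
  have e1: "Tf th r r2 = T1"
  proof -
    have "Kc th r r2 = cot (be r)"
      unfolding Kc_def cotr2 using sr sth by (simp add: ka_def field_simps)
    moreover have "acot (cot (be r)) = be r" using rng[OF r(1,2)] x Bs2 by (intro acot_cot) auto
    ultimately show ?thesis unfolding Tf_def using cr by (simp add: be_def x_def)
  qed
  have e2: "Tf th r2 r = T2"
  proof -
    have "Kc th r2 r = (cos r + ka r * cos th) / (D r * sin th)"
      unfolding Kc_def sinr2 cosr2 using sr sth Dr by (simp add: cot_def field_simps)
    then show ?thesis unfolding Tf_def cosr2 using r(3) by (simp add: Phi_def)
  qed
  show ?thesis using rpos r rh r2 e1 e2 by (intro exI[of _ r] exI[of _ r2]) auto
qed


lemma gram_identity:
  fixes x y z :: "real^3"
  shows "((x \<times> y) \<bullet> z)\<^sup>2 = (x\<bullet>x)*(y\<bullet>y)*(z\<bullet>z) + 2*(x\<bullet>y)*(y\<bullet>z)*(z\<bullet>x)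
           - (x\<bullet>x)*(y\<bullet>z)\<^sup>2 - (y\<bullet>y)*(z\<bullet>x)\<^sup>2 - (z\<bullet>z)*(x\<bullet>y)\<^sup>2"
  by (simp add: cross3_def inner_vec_def sum_3 power2_eq_square algebra_simps)

lemma triple_swap: fixes c1 c2 p :: "real^3" shows "(c2 \<times> p) \<bullet> c1 = - ((c1 \<times> p) \<bullet> c2)"
  by (simp add: cross3_def inner_vec_def sum_3 algebra_simps)

lemma perp_cross:
  fixes x y w :: "real^3"
  assumes "x \<times> y \<noteq> 0" "w \<bullet> x = 0" "w \<bullet> y = 0"
  shows "w = ((w \<bullet> (x \<times> y)) / ((x \<times> y) \<bullet> (x \<times> y))) *\<^sub>R (x \<times> y)"
proof -
  define a where "a = x \<times> y"
  have a0: "a \<bullet> a > 0" using assms(1) by (simp add: a_def)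
  have "a \<times> w = 0"
  proof -
    have "a \<times> w = - (w \<times> a)" by (rule cross_skew)
    also have "w \<times> a = (w \<bullet> y) *\<^sub>R x - (w \<bullet> x) *\<^sub>R y" unfolding a_def by (rule Lagrange)
    finally show ?thesis using assms by simp
  qed
  then have e: "(a \<bullet> w)\<^sup>2 = (a \<bullet> a) * (w \<bullet> w)"
    using norm_cross_dot[of a w] by (simp add: power2_norm_eq_inner power_mult_distrib)
  define l where "l = (w \<bullet> a) / (a \<bullet> a)"
  have "(w - l *\<^sub>R a) \<bullet> (w - l *\<^sub>R a) = w \<bullet> w - 2 * l * (w \<bullet> a) + l\<^sup>2 * (a \<bullet> a)"
    by (simp add: inner_diff_left inner_diff_right inner_commute power2_eq_square algebra_simps)
  also have "\<dots> = 0" using a0 e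
    by (simp add: l_def field_simps power2_eq_square inner_commute)
  finally have "w - l *\<^sub>R a = 0" by simp
  then show ?thesis by (simp add: l_def a_def)
qed

lemma inner_unit_bounds:
  fixes x y :: "real^3" assumes "x \<in> S2" "y \<in> S2"
  shows "-1 \<le> x \<bullet> y" "x \<bullet> y \<le> 1"
proof -
  have "\<bar>x \<bullet> y\<bar> \<le> 1" using Cauchy_Schwarz_ineq2[of x y] assms by (simp add: S2_def)
  then show "-1 \<le> x \<bullet> y" "x \<bullet> y \<le> 1" by auto
qed

lemma S2_inner_self: "x \<in> S2 \<Longrightarrow> x \<bullet> x = 1"
  by (simp add: S2_def dot_square_norm)

lemma sdist_sym: "sdist x y = sdist y x"
  by (simp add: sdist_def inner_commute)

lemma sdist_triangle:
  fixes x y z :: "real^3" assumes S: "x \<in> S2" "y \<in> S2" "z \<in> S2"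
  shows "sdist x z \<le> sdist x y + sdist y z"
proof -
  define al where "al = arccos (x \<bullet> y)"
  define be where "be = arccos (y \<bullet> z)"
  have b1: "-1 \<le> x \<bullet> y" "x \<bullet> y \<le> 1" using inner_unit_bounds S by auto
  have b2: "-1 \<le> y \<bullet> z" "y \<bullet> z \<le> 1" using inner_unit_bounds S by auto
  have b3: "-1 \<le> x \<bullet> z" "x \<bullet> z \<le> 1" using inner_unit_bounds S by auto
  have al: "0 \<le> al" "al \<le> pi" using arccos_bounded b1 by (auto simp: al_def)
  have be: "0 \<le> be" "be \<le> pi" using arccos_bounded b2 by (auto simp: be_def)
  show ?thesis
  proof (cases "al + be \<le> pi")
    case False
    then show ?thesis using arccos_bounded[OF b3] by (simp add: sdist_def al_def be_def)
  next
    case True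
    define x' where "x' = x - (x \<bullet> y) *\<^sub>R y"
    define z' where "z' = z - (z \<bullet> y) *\<^sub>R y"
    have yy: "y \<bullet> y = 1" "x \<bullet> x = 1" "z \<bullet> z = 1" using S S2_inner_self by auto
    have xz: "x' \<bullet> z' = x \<bullet> z - (x \<bullet> y) * (y \<bullet> z)"
      unfolding x'_def z'_def using yy
      by (simp add: inner_diff_left inner_diff_right inner_commute algebra_simps)
    have nx: "x' \<bullet> x' = 1 - (x \<bullet> y)\<^sup>2"
      unfolding x'_def using yy
      by (simp add: inner_diff_left inner_diff_right inner_commute algebra_simps power2_eq_square)
    have nz: "z' \<bullet> z' = 1 - (y \<bullet> z)\<^sup>2"
      unfolding z'_def using yy
      by (simp add: inner_diff_left inner_diff_right inner_commute algebra_simps power2_eq_square)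
    have "\<bar>x' \<bullet> z'\<bar> \<le> norm x' * norm z'" by (rule Cauchy_Schwarz_ineq2)
    also have "norm x' = sin al"
    proof -
      have "norm x' = sqrt (1 - (x \<bullet> y)\<^sup>2)" using nx by (simp add: norm_eq_sqrt_inner)
      also have "\<dots> = sin al" unfolding al_def using b1 by (simp add: sin_arccos)
      finally show ?thesis .
    qed
    also have "norm z' = sin be"
    proof -
      have "norm z' = sqrt (1 - (y \<bullet> z)\<^sup>2)" using nz by (simp add: norm_eq_sqrt_inner)
      also have "\<dots> = sin be" unfolding be_def using b2 by (simp add: sin_arccos)
      finally show ?thesis .
    qed
    finally have "x \<bullet> z \<ge> cos al * cos be - sin al * sin be"
      using xz b1 b2 by (simp add: al_def be_def)
    then have "cos (al + be) \<le> x \<bullet> z" by (simp add: cos_add)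
    then have "arccos (x \<bullet> z) \<le> arccos (cos (al + be))"
      using b3 by (intro arccos_le_arccos) (auto simp: cos_ge_minus_one)
    also have "\<dots> = al + be" using True al be by (intro arccos_cos) auto
    finally show ?thesis by (simp add: sdist_def al_def be_def)
  qed
qed


lemma bigon_dist:
  assumes "is_bigon c1 r1 c2 r2"
  shows "\<bar>r1 - r2\<bar> < sdist c1 c2" "sdist c1 c2 < r1 + r2"
proof -
  have S: "c1 \<in> S2" "c2 \<in> S2" using assms by (auto simp: is_bigon_def)
  obtain x where x: "x \<in> S2" "sdist c1 x < r1" "sdist c2 x < r2"
    using assms by (auto simp: is_bigon_def sdisk_def)
  have "sdist c1 c2 \<le> sdist c1 x + sdist x c2" using sdist_triangle S x by blast
  then show "sdist c1 c2 < r1 + r2" using x by (simp add: sdist_sym)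
  have "r2 < sdist c1 c2 + r1"
  proof (rule ccontr)
    assume "\<not> r2 < sdist c1 c2 + r1"
    then have "sdisk c1 r1 \<subseteq> sdisk c2 r2"
    proof (auto simp: sdisk_def)
      fix y assume y: "y \<in> S2" "sdist c1 y < r1" "\<not> r2 < sdist c1 c2 + r1"
      have "sdist c2 y \<le> sdist c2 c1 + sdist c1 y" using sdist_triangle S y by blast
      then show "sdist c2 y < r2" using y by (simp add: sdist_sym)
    qed
    then show False using assms by (simp add: is_bigon_def)
  qed
  moreover have "r1 < sdist c1 c2 + r2"
  proof (rule ccontr)
    assume "\<not> r1 < sdist c1 c2 + r2"
    then have "sdisk c2 r2 \<subseteq> sdisk c1 r1"
    proof (auto simp: sdisk_def)
      fix y assume y: "y \<in> S2" "sdist c2 y < r2" "\<not> r1 < sdist c1 c2 + r2"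
      have "sdist c1 y \<le> sdist c1 c2 + sdist c2 y" using sdist_triangle S y by blast
      then show "sdist c1 y < r1" using y by (simp add: sdist_sym)
    qed
    then show False using assms by (simp add: is_bigon_def)
  qed
  ultimately show "\<bar>r1 - r2\<bar> < sdist c1 c2" by linarith
qed

lemma corner_exists:
  fixes c1 c2 :: "real^3"
  assumes S: "c1 \<in> S2" "c2 \<in> S2" and k: "\<bar>c1 \<bullet> c2\<bar> < 1"
    and G: "1 - (c1 \<bullet> c2)\<^sup>2 - C1\<^sup>2 - C2\<^sup>2 + 2 * (c1 \<bullet> c2) * C1 * C2 > 0"
  shows "\<exists>p \<in> S2. c1 \<bullet> p = C1 \<and> c2 \<bullet> p = C2"
proof -
  define k where "k = c1 \<bullet> c2"
  define GG where "GG = 1 - k\<^sup>2 - C1\<^sup>2 - C2\<^sup>2 + 2 * k * C1 * C2"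
  have GG: "GG > 0" using G by (simp add: GG_def k_def)
  have k1: "1 - k\<^sup>2 > 0" using k by (simp add: k_def abs_square_less_1)
  define L where "L = 1 - k\<^sup>2"
  have L: "L > 0" using k1 by (simp add: L_def)
  define a where "a = (C1 - k * C2) / L"
  define b where "b = (C2 - k * C1) / L"
  define g where "g = sqrt GG / L"
  define n where "n = c1 \<times> c2"
  define p where "p = a *\<^sub>R c1 + b *\<^sub>R c2 + g *\<^sub>R n"
  have ii: "c1 \<bullet> c1 = 1" "c2 \<bullet> c2 = 1" using S S2_inner_self by auto
  have n1: "c1 \<bullet> n = 0" "c2 \<bullet> n = 0" unfolding n_def using dot_cross_self
    by (auto simp: inner_commute)
  have nn: "n \<bullet> n = L"
    using norm_cross[of c1 c2] S unfolding n_def k_def L_def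
    by (simp add: S2_def power2_norm_eq_inner[symmetric])
  have ab1: "a + b * k = C1"
  proof -
    have "(C1 - k * C2) + (C2 - k * C1) * k = C1 * L" by (simp add: L_def algebra_simps power2_eq_square)
    then show ?thesis using L by (simp add: a_def b_def field_simps)
  qed
  have ab2: "a * k + b = C2"
  proof -
    have "(C1 - k * C2) * k + (C2 - k * C1) = C2 * L" by (simp add: L_def algebra_simps power2_eq_square)
    then show ?thesis using L by (simp add: a_def b_def field_simps)
  qed
  have p1: "c1 \<bullet> p = C1" unfolding p_def using ii n1 ab1
    by (simp add: inner_add_right k_def[symmetric])
  have p2: "c2 \<bullet> p = C2" unfolding p_def using ii n1 ab2
    by (simp add: inner_add_right inner_commute k_def[symmetric])
  have "p \<bullet> p = a * (c1 \<bullet> p) + b * (c2 \<bullet> p) + g * (n \<bullet> p)"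
    unfolding p_def by (simp add: inner_add_left)
  also have "n \<bullet> p = g * L" unfolding p_def using n1 nn
    by (simp add: inner_add_right inner_commute)
  finally have "p \<bullet> p = a * C1 + b * C2 + g\<^sup>2 * L" using p1 p2
    by (simp add: power2_eq_square)
  also have "g\<^sup>2 = GG / L\<^sup>2" using GG by (simp add: g_def power_divide)
  also have "a * C1 + b * C2 + GG / L\<^sup>2 * L = 1"
  proof -
    have e: "(C1 - k * C2) * C1 + (C2 - k * C1) * C2 = L - GG"
      by (simp add: GG_def L_def algebra_simps power2_eq_square)
    have "a * C1 + b * C2 = ((C1 - k * C2) * C1 + (C2 - k * C1) * C2) / L"
      by (simp add: a_def b_def add_divide_distrib)
    also have "\<dots> = (L - GG) / L" by (simp only: e)
    finally have "a * C1 + b * C2 = (L - GG) / L" .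
    moreover have "GG / L\<^sup>2 * L = GG / L" using L by (simp add: power2_eq_square)
    ultimately show ?thesis using L by (simp add: diff_divide_distrib)
  qed
  finally have "p \<bullet> p = 1" .
  then have "p \<in> S2" by (simp add: S2_def norm_eq_sqrt_inner)
  then show ?thesis using p1 p2 by blast
qed

lemma cross_norm_sq:
  fixes c p :: "real^3" assumes "c \<in> S2" "p \<in> S2"
  shows "(c \<times> p) \<bullet> (c \<times> p) = 1 - (c \<bullet> p)\<^sup>2"
  using norm_cross[of c p] assms by (simp add: S2_def power2_norm_eq_inner[symmetric])

lemma tangent_form:
  fixes c p w :: "real^3"
  assumes "c \<in> S2" "p \<in> S2" "0 < r" "r < pi/2" "c \<bullet> p = cos r" "w \<bullet> c = 0" "w \<bullet> p = 0" "norm w = 1"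
  shows "\<exists>e. (e = 1 \<or> e = -1) \<and> w = (e / sin r) *\<^sub>R (c \<times> p)"
proof -
  have sr: "sin r > 0" using assms by (intro sin_gt_zero) auto
  have aa: "(c \<times> p) \<bullet> (c \<times> p) = (sin r)\<^sup>2"
    using cross_norm_sq[OF assms(1,2)] assms(5) by (simp add: sin_squared_eq)
  then have a0: "c \<times> p \<noteq> 0" using sr by auto
  have w: "w = ((w \<bullet> (c \<times> p)) / ((c \<times> p) \<bullet> (c \<times> p))) *\<^sub>R (c \<times> p)"
    using perp_cross[OF a0] assms(6,7) by blast
  define e where "e = (w \<bullet> (c \<times> p)) / sin r"
  have w2: "w = (e / sin r) *\<^sub>R (c \<times> p)" using w aa sr
    by (simp add: e_def power2_eq_square)
  have "1 = w \<bullet> w" using assms(8) by (simp add: dot_square_norm)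
  also have "\<dots> = (e / sin r)\<^sup>2 * (sin r)\<^sup>2" by (subst (1 2) w2) (simp add: aa power2_eq_square)
  also have "\<dots> = e\<^sup>2" using sr by (simp add: power_divide)
  finally have "e\<^sup>2 = 1" by simp
  then have "e = 1 \<or> e = -1" by (simp add: power2_eq_1_iff)
  then show ?thesis using w2 by blast
qed

lemma angle_formula:
  fixes c1 c2 p w1 w2 :: "real^3"
  assumes S: "c1 \<in> S2" "c2 \<in> S2" "p \<in> S2"
    and r: "0 < r1" "r1 < pi/2" "0 < r2" "r2 < pi/2"
    and p: "c1 \<bullet> p = cos r1" "c2 \<bullet> p = cos r2"
    and w1: "norm w1 = 1" "w1 \<bullet> p = 0" "w1 \<bullet> c1 = 0" "w1 \<bullet> c2 > 0"
    and w2: "norm w2 = 1" "w2 \<bullet> p = 0" "w2 \<bullet> c2 = 0" "w2 \<bullet> c1 > 0"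
  shows "w1 \<bullet> w2 = (cos r1 * cos r2 - c1 \<bullet> c2) / (sin r1 * sin r2)"
proof -
  have s1: "sin r1 > 0" using r by (intro sin_gt_zero) auto
  have s2: "sin r2 > 0" using r by (intro sin_gt_zero) auto
  obtain e1 where e1: "e1 = 1 \<or> e1 = -1" "w1 = (e1 / sin r1) *\<^sub>R (c1 \<times> p)"
    using tangent_form[OF S(1,3) r(1,2) p(1) w1(3,2,1)] by blast
  obtain e2 where e2: "e2 = 1 \<or> e2 = -1" "w2 = (e2 / sin r2) *\<^sub>R (c2 \<times> p)"
    using tangent_form[OF S(2,3) r(3,4) p(2) w2(3,2,1)] by blast
  define t where "t = (c1 \<times> p) \<bullet> c2"
  have t1: "e1 * t > 0" using w1(4) s1 e1(2)
    by (simp add: t_def zero_less_mult_iff zero_less_divide_iff)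
  have "(e2 / sin r2) * (- t) > 0" using w2(4) e2(2) triple_swap[of c2 p c1]
    by (simp add: t_def)
  moreover have "- e2 * t = sin r2 * ((e2 / sin r2) * (- t))" using s2 by (simp add: field_simps)
  ultimately have t2: "- e2 * t > 0" using s2 by (simp add: divide_less_0_iff)
  have ee: "e1 * e2 = -1" using e1(1) e2(1) t1 t2 by auto
  have "w1 \<bullet> w2 = (e1 * e2) / (sin r1 * sin r2) * ((c1 \<times> p) \<bullet> (c2 \<times> p))"
    using e1(2) e2(2) by (simp add: mult.commute mult.left_commute)
  also have "(c1 \<times> p) \<bullet> (c2 \<times> p) = (c1 \<bullet> c2) * (p \<bullet> p) - (c1 \<bullet> p) * (p \<bullet> c2)"
    by (rule dot_cross)
  finally show ?thesis using ee S2_inner_self[OF S(3)] p s1 s2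
    by (simp add: inner_commute field_simps)
qed

lemma angle_witness:
  fixes c1 c2 p :: "real^3"
  assumes S: "c1 \<in> S2" "c2 \<in> S2" "p \<in> S2"
    and r: "0 < r1" "r1 < pi/2" "0 < r2" "r2 < pi/2"
    and p: "c1 \<bullet> p = cos r1" "c2 \<bullet> p = cos r2"
    and G: "1 - (c1 \<bullet> c2)\<^sup>2 - (cos r1)\<^sup>2 - (cos r2)\<^sup>2 + 2 * (c1 \<bullet> c2) * cos r1 * cos r2 > 0"
  shows "\<exists>w1 w2. norm w1 = 1 \<and> w1 \<bullet> p = 0 \<and> w1 \<bullet> c1 = 0 \<and> w1 \<bullet> c2 > 0 \<and>
                 norm w2 = 1 \<and> w2 \<bullet> p = 0 \<and> w2 \<bullet> c2 = 0 \<and> w2 \<bullet> c1 > 0"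
proof -
  have s1: "sin r1 > 0" using r by (intro sin_gt_zero) auto
  have s2: "sin r2 > 0" using r by (intro sin_gt_zero) auto
  define t where "t = (c1 \<times> p) \<bullet> c2"
  have "t\<^sup>2 = 1 - (c1 \<bullet> c2)\<^sup>2 - (cos r1)\<^sup>2 - (cos r2)\<^sup>2 + 2 * (c1 \<bullet> c2) * cos r1 * cos r2"
    unfolding t_def gram_identity using S2_inner_self[OF S(1)] S2_inner_self[OF S(2)]
      S2_inner_self[OF S(3)] p
    by (simp add: inner_commute algebra_simps power2_eq_square)
  then have t0: "t \<noteq> 0" using G by auto
  define e where "e = sgn t"
  have et: "e * t > 0" using t0 by (simp add: e_def sgn_real_def)
  have ee: "e * e = 1" using t0 by (simp add: e_def sgn_real_def)
  define w1 where "w1 = (e / sin r1) *\<^sub>R (c1 \<times> p)"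
  define w2 where "w2 = (- e / sin r2) *\<^sub>R (c2 \<times> p)"
  have n1: "(c1 \<times> p) \<bullet> (c1 \<times> p) = (sin r1)\<^sup>2"
    using cross_norm_sq[OF S(1,3)] p by (simp add: sin_squared_eq)
  have n2: "(c2 \<times> p) \<bullet> (c2 \<times> p) = (sin r2)\<^sup>2"
    using cross_norm_sq[OF S(2,3)] p by (simp add: sin_squared_eq)
  have "w1 \<bullet> w1 = 1" unfolding w1_def using n1 s1 ee by (simp add: power2_eq_square)
  then have nw1: "norm w1 = 1" by (simp add: norm_eq_sqrt_inner)
  have "w2 \<bullet> w2 = 1" unfolding w2_def using n2 s2 ee by (simp add: power2_eq_square)
  then have nw2: "norm w2 = 1" by (simp add: norm_eq_sqrt_inner)
  have o1: "w1 \<bullet> p = 0" "w1 \<bullet> c1 = 0" unfolding w1_def using dot_cross_self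
    by (auto simp: inner_commute)
  have o2: "w2 \<bullet> p = 0" "w2 \<bullet> c2 = 0" unfolding w2_def using dot_cross_self
    by (auto simp: inner_commute)
  have q1: "w1 \<bullet> c2 > 0" unfolding w1_def using et s1
    by (simp add: t_def[symmetric] zero_less_mult_iff zero_less_divide_iff)
  have q2: "w2 \<bullet> c1 > 0" unfolding w2_def using et s2 triple_swap[of c2 p c1]
    by (simp add: t_def[symmetric] zero_less_mult_iff zero_less_divide_iff)
  show ?thesis using nw1 nw2 o1 o2 q1 q2 by blast
qed


definition cset :: "real \<Rightarrow> real \<Rightarrow> real \<Rightarrow> real \<Rightarrow> real set" where
  "cset a b k c = {t \<in> {a..<b}. k \<le> cos (t - c)}"

lemma cset_borel: "cset a b k c \<in> sets lborel"
proof -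
  have "closed {t::real. k \<le> cos (t - c)}"
    by (intro closed_Collect_le continuous_intros)
  then have "{t::real. k \<le> cos (t - c)} \<in> sets borel" by (rule borel_closed)
  moreover have "{a..<b} \<in> sets borel" by simp
  ultimately have "{a..<b} \<inter> {t::real. k \<le> cos (t - c)} \<in> sets borel" by blast
  moreover have "cset a b k c = {a..<b} \<inter> {t::real. k \<le> cos (t - c)}"
    by (auto simp: cset_def)
  ultimately show ?thesis by simp
qed

lemma cset_finite: "emeasure lborel (cset a b k c) \<noteq> \<infinity>"
proof -
  have "emeasure lborel (cset a b k c) \<le> emeasure lborel {a..b}"
    by (intro emeasure_mono) (auto simp: cset_def)
  also have "\<dots> < \<infinity>" by (simp add: emeasure_lborel_Icc_eq)
  finally show ?thesis by simp
qed

lemma cset_shift: "measure lborel (cset (a + 2*pi) (b + 2*pi) k c) = measure lborel (cset a b k c)"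
proof -
  have e: "cset (a + 2*pi) (b + 2*pi) k c = (+) (2*pi) ` cset a b k c"
  proof (intro set_eqI iffI)
    fix t assume t: "t \<in> cset (a + 2*pi) (b + 2*pi) k c"
    have "cos (t - 2*pi - c) = cos (t - c)"
      using cos_periodic[of "t - 2*pi - c"] by (simp add: algebra_simps)
    then have "t - 2*pi \<in> cset a b k c" using t by (auto simp: cset_def)
    then show "t \<in> (+) (2*pi) ` cset a b k c" by (intro image_eqI[of _ _ "t - 2*pi"]) auto
  next
    fix t assume "t \<in> (+) (2*pi) ` cset a b k c"
    then obtain s where s: "s \<in> cset a b k c" "t = 2*pi + s" by auto
    have "cos (2*pi + s - c) = cos (s - c)"
      using cos_periodic[of "s - c"] by (simp add: algebra_simps)
    then show "t \<in> cset (a + 2*pi) (b + 2*pi) k c" using s by (auto simp: cset_def)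
  qed
  have "measure lborel (cset (a + 2*pi) (b + 2*pi) k c) = measure lebesgue (cset (a + 2*pi) (b + 2*pi) k c)"
    using cset_borel by (simp add: measure_completion)
  also have "\<dots> = measure lebesgue (cset a b k c)" unfolding e by (rule measure_translation)
  also have "\<dots> = measure lborel (cset a b k c)"
    using cset_borel by (simp add: measure_completion)
  finally show ?thesis .
qed

lemma cset_split:
  assumes "x \<le> y" "y \<le> z"
  shows "measure lborel (cset x z k c) = measure lborel (cset x y k c) + measure lborel (cset y z k c)"
proof -
  have "cset x z k c = cset x y k c \<union> cset y z k c" using assms by (auto simp: cset_def)
  moreover have "cset x y k c \<inter> cset y z k c = {}" by (auto simp: cset_def)
  ultimately show ?thesis using cset_borel cset_finite by (simp add: measure_Union)
qed

lemma cset_rotate: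
  assumes "0 \<le> a" "a \<le> 2*pi"
  shows "measure lborel (cset 0 (2*pi) k c) = measure lborel (cset a (a + 2*pi) k c)"
proof -
  have "measure lborel (cset 0 (2*pi) k c) = measure lborel (cset 0 a k c) + measure lborel (cset a (2*pi) k c)"
    using assms by (intro cset_split) auto
  moreover have "measure lborel (cset a (a + 2*pi) k c) = measure lborel (cset a (2*pi) k c) + measure lborel (cset (2*pi) (a + 2*pi) k c)"
    using assms by (intro cset_split) auto
  moreover have "measure lborel (cset (2*pi) (a + 2*pi) k c) = measure lborel (cset 0 a k c)"
    using cset_shift[of 0 a k c] by simp
  ultimately show ?thesis by simp
qed

lemma cset_centered:
  assumes "0 < be" "be < pi"
  shows "measure lborel (cset (c - pi) (c + pi) (cos be) c) = 2 * be"
proof -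
  have "cset (c - pi) (c + pi) (cos be) c = {c - be .. c + be}"
  proof (intro set_eqI iffI)
    fix t assume t: "t \<in> cset (c - pi) (c + pi) (cos be) c"
    then have r: "-pi \<le> t - c" "t - c < pi" "cos be \<le> cos \<bar>t - c\<bar>" by (auto simp: cset_def)
    have "\<bar>t - c\<bar> \<le> be" using r assms by (subst (asm) cos_mono_le_eq) auto
    then show "t \<in> {c - be .. c + be}" by auto
  next
    fix t assume t: "t \<in> {c - be .. c + be}"
    then have "\<bar>t - c\<bar> \<le> be" by auto
    then have "cos be \<le> cos \<bar>t - c\<bar>" using assms by (subst cos_mono_le_eq) auto
    then show "t \<in> cset (c - pi) (c + pi) (cos be) c" using t assms by (auto simp: cset_def)
  qed
  then show ?thesis using assms by simp
qed

lemma cset_measure: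
  assumes k: "-1 < k" "k < 1" and t0: "0 \<le> t0" "t0 < 2*pi"
  shows "measure lborel {t \<in> {0..<2*pi}. k \<le> cos (t - t0)} = 2 * arccos k"
proof -
  define be where "be = arccos k"
  have be: "0 < be" "be < pi" using arccos_lt_bounded k by (auto simp: be_def)
  have cb: "cos be = k" using k by (simp add: be_def)
  define c where "c = (if pi \<le> t0 then t0 else t0 + 2*pi)"
  have cc: "cos (t - c) = cos (t - t0)" for t
    using cos_periodic[of "t - t0 - 2*pi"] by (simp add: c_def algebra_simps)
  have c: "pi \<le> c" "c \<le> 3*pi" using t0 by (auto simp: c_def)
  have "{t \<in> {0..<2*pi}. k \<le> cos (t - t0)} = cset 0 (2*pi) (cos be) c"
    by (simp add: cset_def cc cb)
  moreover have "measure lborel (cset 0 (2*pi) (cos be) c) = measure lborel (cset (c - pi) ((c - pi) + 2*pi) (cos be) c)"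
    using c by (intro cset_rotate) auto
  moreover have "(c - pi) + 2*pi = c + pi" by simp
  ultimately show ?thesis using cset_centered[OF be, of c] by (simp add: be_def)
qed


lemma completeness3:
  fixes c u v x :: "real^3"
  assumes n: "norm c = 1" "norm u = 1" "norm v = 1"
    and o: "u \<bullet> v = 0" "u \<bullet> c = 0" "v \<bullet> c = 0"
  shows "(x \<bullet> c)\<^sup>2 + (x \<bullet> u)\<^sup>2 + (x \<bullet> v)\<^sup>2 = x \<bullet> x"
proof -
  have cc: "c \<bullet> c = 1" "u \<bullet> u = 1" "v \<bullet> v = 1" using n by (simp_all add: dot_square_norm)
  define w where "w = c \<times> u"
  have ww: "w \<bullet> w = 1" unfolding w_def using norm_cross[of c u] n o
    by (simp add: power2_norm_eq_inner[symmetric] inner_commute)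
  then have w0: "c \<times> u \<noteq> 0" by (auto simp: w_def)
  have v: "v = ((v \<bullet> w) / (w \<bullet> w)) *\<^sub>R w"
    using perp_cross[OF w0] o by (simp add: w_def inner_commute)
  have "1 = v \<bullet> v" using cc by simp
  also have "\<dots> = (v \<bullet> w)\<^sup>2" using ww by (subst (1 2) v) (simp add: power2_eq_square)
  finally have vw: "(v \<bullet> w)\<^sup>2 = 1" by simp
  have "(x \<bullet> v)\<^sup>2 = (v \<bullet> w)\<^sup>2 * (x \<bullet> w)\<^sup>2" using ww
    by (subst v) (simp add: power2_eq_square)
  also have "\<dots> = (x \<bullet> w)\<^sup>2" using vw by simp
  also have "\<dots> = ((c \<times> u) \<bullet> x)\<^sup>2" by (simp add: w_def inner_commute)
  also have "\<dots> = x \<bullet> x - (u \<bullet> x)\<^sup>2 - (x \<bullet> c)\<^sup>2"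
    unfolding gram_identity using cc o by (simp add: inner_commute power2_eq_square)
  finally show ?thesis by (simp add: inner_commute)
qed

lemma arccos_le_iff:
  assumes "-1 \<le> y" "y \<le> 1" "0 \<le> r" "r \<le> pi"
  shows "arccos y \<le> r \<longleftrightarrow> cos r \<le> y"
proof
  assume "arccos y \<le> r"
  then have "cos r \<le> cos (arccos y)" using assms arccos_bounded[of y]
    by (intro cos_monotone_0_pi_le) auto
  then show "cos r \<le> y" using assms by simp
next
  assume "cos r \<le> y"
  then have "arccos y \<le> arccos (cos r)" using assms by (intro arccos_le_arccos) auto
  then show "arccos y \<le> r" using assms by (simp add: arccos_cos)
qed

lemma arc_length:
  fixes c c' :: "real^3"
  assumes S: "c \<in> S2" "c' \<in> S2" and k: "\<bar>c \<bullet> c'\<bar> < 1"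
    and r: "0 < r" "r < pi" "0 \<le> r'" "r' \<le> pi"
    and k1: "-1 < k1" "k1 < 1"
    and k1d: "k1 = (cos r' - cos r * (c \<bullet> c')) / (sin r * sqrt (1 - (c \<bullet> c')\<^sup>2))"
  shows "circle_arc_length c r (bigon_side c r c' r') (sin r * (2 * arccos k1))"
  unfolding circle_arc_length_def
proof (intro allI impI)
  fix u v :: "real^3"
  assume uv: "norm u = 1 \<and> norm v = 1 \<and> u \<bullet> v = 0 \<and> u \<bullet> c = 0 \<and> v \<bullet> c = 0"
  define k where "k = c \<bullet> c'"
  define s where "s = sqrt (1 - k\<^sup>2)"
  have k2: "1 - k\<^sup>2 > 0" using k by (simp add: k_def abs_square_less_1)
  have sp: "s > 0" using k2 by (simp add: s_def)
  have ss: "s * s = 1 - k\<^sup>2" using k2 by (simp add: s_def)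
  have sr: "sin r > 0" using r by (intro sin_gt_zero) auto
  have nc: "norm c = 1" "norm c' = 1" using S by (auto simp: S2_def)
  define A where "A = c' \<bullet> u"
  define B where "B = c' \<bullet> v"
  have "(c' \<bullet> c)\<^sup>2 + (c' \<bullet> u)\<^sup>2 + (c' \<bullet> v)\<^sup>2 = c' \<bullet> c'"
    by (rule completeness3) (use uv nc in auto)
  then have AB: "A\<^sup>2 + B\<^sup>2 = 1 - k\<^sup>2"
    using S2_inner_self[OF S(2)] unfolding A_def B_def k_def inner_commute[of c' c] by simp
  have "(A / s)\<^sup>2 + (B / s)\<^sup>2 = (A\<^sup>2 + B\<^sup>2) / (s * s)"
    by (simp add: power_divide power2_eq_square add_divide_distrib)
  also have "\<dots> = 1" using AB ss k2 by simp
  finally have "(A / s)\<^sup>2 + (B / s)\<^sup>2 = 1" .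
  then obtain t0 where t0: "0 \<le> t0" "t0 < 2*pi" "A / s = cos t0" "B / s = sin t0"
    by (rule sincos_total_2pi)
  have AB': "A = s * cos t0" "B = s * sin t0" using t0 sp by (auto simp: field_simps)
  have mem: "circle_param c r u v t \<in> bigon_side c r c' r' \<longleftrightarrow> k1 \<le> cos (t - t0)" for t
  proof -
    define w where "w = cos t *\<^sub>R u + sin t *\<^sub>R v"
    have cw: "c \<bullet> w = 0" using uv by (simp add: w_def inner_add_right inner_commute)
    have uu: "u \<bullet> u = 1" "v \<bullet> v = 1" "v \<bullet> u = 0" using uv by (simp_all add: dot_square_norm inner_commute)
    have ww: "w \<bullet> w = 1" using uu
      by (simp add: w_def inner_add_left inner_add_right inner_commute[of u v]
          power2_eq_square[symmetric])
    have cc: "c \<bullet> c = 1" using S2_inner_self[OF S(1)] .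
    have P: "circle_param c r u v t = cos r *\<^sub>R c + sin r *\<^sub>R w"
      by (simp add: circle_param_def w_def)
    have "circle_param c r u v t \<bullet> circle_param c r u v t = (cos r)\<^sup>2 + (sin r)\<^sup>2"
      unfolding P using cw ww cc
      by (simp add: inner_add_left inner_add_right inner_commute power2_eq_square)
    then have inS: "circle_param c r u v t \<in> S2" by (simp add: S2_def norm_eq_sqrt_inner)
    have "c \<bullet> circle_param c r u v t = cos r" unfolding P using cw cc
      by (simp add: inner_add_right)
    then have d1: "sdist c (circle_param c r u v t) = r" using r by (simp add: sdist_def arccos_cos)
    have "c' \<bullet> circle_param c r u v t = cos r * (c' \<bullet> c) + sin r * (cos t * A + sin t * B)"
      unfolding P w_def A_def B_def by (simp add: inner_add_right)
    also have "cos t * A + sin t * B = s * cos (t - t0)"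
      unfolding AB' cos_diff by (simp add: algebra_simps)
    finally have cp: "c' \<bullet> circle_param c r u v t = cos r * k + sin r * (s * cos (t - t0))"
      by (simp add: k_def inner_commute)
    have bd: "-1 \<le> c' \<bullet> circle_param c r u v t" "c' \<bullet> circle_param c r u v t \<le> 1"
      using inner_unit_bounds[OF S(2) inS] by auto
    have "circle_param c r u v t \<in> bigon_side c r c' r' \<longleftrightarrow> cos r' \<le> c' \<bullet> circle_param c r u v t"
      unfolding bigon_side_def using inS d1 arccos_le_iff[OF bd r(3,4)] by (simp add: sdist_def)
    also have "\<dots> \<longleftrightarrow> cos r' - cos r * k \<le> cos (t - t0) * (sin r * s)" unfolding cp by (simp add: algebra_simps)
    also have "\<dots> \<longleftrightarrow> k1 \<le> cos (t - t0)"
    proof -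
      have pos: "sin r * s > 0" using sr sp by simp
      have "k1 = (cos r' - cos r * k) / (sin r * s)" unfolding k1d k_def s_def ..
      then show ?thesis using pos_divide_le_eq[OF pos, of "cos r' - cos r * k" "cos (t - t0)"] by simp
    qed
    finally show ?thesis .
  qed
  have "{t \<in> {0..<2*pi}. circle_param c r u v t \<in> bigon_side c r c' r'} = {t \<in> {0..<2*pi}. k1 \<le> cos (t - t0)}"
    using mem by auto
  then show "sin r * (2 * arccos k1) = sin r * measure lborel {t \<in> {0..<2*pi}. circle_param c r u v t \<in> bigon_side c r c' r'}"
    using cset_measure[OF k1 t0(1,2)] by simp
qed

lemma frame_exists:
  fixes c c' :: "real^3"
  assumes S: "c \<in> S2" "c' \<in> S2" and k: "\<bar>c \<bullet> c'\<bar> < 1"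
  shows "\<exists>u v. norm u = 1 \<and> norm v = 1 \<and> u \<bullet> v = 0 \<and> u \<bullet> c = 0 \<and> v \<bullet> c = 0"
proof -
  define k where "k = c \<bullet> c'"
  have k2: "1 - k\<^sup>2 > 0" using k by (simp add: k_def abs_square_less_1)
  define s where "s = sqrt (1 - k\<^sup>2)"
  have sp: "s > 0" using k2 by (simp add: s_def)
  have ss: "s * s = 1 - k\<^sup>2" using k2 by (simp add: s_def)
  have cc: "c \<bullet> c = 1" "c' \<bullet> c' = 1" using S S2_inner_self by auto
  define u where "u = (1 / s) *\<^sub>R (c' - k *\<^sub>R c)"
  have "(c' - k *\<^sub>R c) \<bullet> c = 0" using cc by (simp add: inner_diff_left k_def inner_commute[of c' c])
  then have uc: "u \<bullet> c = 0" by (simp add: u_def)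
  have "u \<bullet> u = 1" using cc sp ss
    by (simp add: u_def inner_diff_left inner_diff_right k_def inner_commute power2_eq_square field_simps)
  then have nu: "norm u = 1" by (simp add: norm_eq_sqrt_inner)
  define v where "v = c \<times> u"
  have "v \<bullet> v = 1" unfolding v_def using norm_cross[of c u] nu S uc
    by (simp add: S2_def power2_norm_eq_inner[symmetric] inner_commute)
  then have nv: "norm v = 1" by (simp add: norm_eq_sqrt_inner)
  have "u \<bullet> v = 0" "v \<bullet> c = 0" unfolding v_def using dot_cross_self by (auto simp: inner_commute)
  then show ?thesis using nu nv uc by blast
qed

lemma side_curv_iff:
  fixes c c' :: "real^3"
  assumes S: "c \<in> S2" "c' \<in> S2" and k: "\<bar>c \<bullet> c'\<bar> < 1"
    and r: "0 < r" "r < pi" "0 \<le> r'" "r' \<le> pi"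
    and k1: "-1 < k1" "k1 < 1"
    and k1d: "k1 = (cos r' - cos r * (c \<bullet> c')) / (sin r * sqrt (1 - (c \<bullet> c')\<^sup>2))"
  shows "side_total_curvature c r c' r' T \<longleftrightarrow> T = 2 * cos r * arccos k1"
proof -
  have sr: "sin r > 0" using r by (intro sin_gt_zero) auto
  have AL: "circle_arc_length c r (bigon_side c r c' r') (sin r * (2 * arccos k1))"
    by (rule arc_length[OF S k r k1 k1d])
  have cot: "sin r * (2 * arccos k1) * cot r = 2 * cos r * arccos k1"
    using sr by (simp add: cot_def)
  obtain u v where uv: "norm u = 1 \<and> norm v = 1 \<and> u \<bullet> v = 0 \<and> u \<bullet> c = 0 \<and> v \<bullet> c = 0"
    using frame_exists[OF S k] by blast
  show ?thesis
  proof
    assume "side_total_curvature c r c' r' T"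
    then obtain L where L: "circle_arc_length c r (bigon_side c r c' r') L" "T = L * cot r"
      by (auto simp: side_total_curvature_def)
    define M where "M = measure lborel {t \<in> {0..<2*pi}. circle_param c r u v t \<in> bigon_side c r c' r'}"
    have "L = sin r * M" using L(1) uv unfolding circle_arc_length_def M_def by blast
    moreover have "sin r * (2 * arccos k1) = sin r * M" using AL uv unfolding circle_arc_length_def M_def by blast
    ultimately have "L = sin r * (2 * arccos k1)" by auto
    then show "T = 2 * cos r * arccos k1" using L(2) cot by simp
  next
    assume "T = 2 * cos r * arccos k1"
    then show "side_total_curvature c r c' r' T" unfolding side_total_curvature_def
      using AL cot by (intro exI[of _ "sin r * (2 * arccos k1)"]) auto
  qed
qed


definition refl3 :: "real^3 \<Rightarrow> real^3 \<Rightarrow> real^3" where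
  "refl3 n x = x - (2 * (x \<bullet> n) / (n \<bullet> n)) *\<^sub>R n"

lemma refl3_orth: "orthogonal_transformation (refl3 n)"
proof -
  have lin: "linear (refl3 n)"
    by (rule linearI) (simp_all add: refl3_def inner_add_left algebra_simps add_divide_distrib scaleR_add_left
        scaleR_diff_right)
  have "norm (refl3 n v) = norm v" for v
  proof (cases "n = 0")
    case True then show ?thesis by (simp add: refl3_def)
  next
    case False
    then have nn: "n \<bullet> n > 0" by simp
    have "refl3 n v \<bullet> refl3 n v = v \<bullet> v"
      unfolding refl3_def using nn
      by (simp add: inner_diff_left inner_diff_right inner_commute field_simps power2_eq_square)
    then show ?thesis by (simp add: norm_eq_sqrt_inner)
  qed
  then show ?thesis using lin by (simp add: orthogonal_transformation)
qed

lemma refl3_swap: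
  assumes "norm x = norm y" shows "refl3 (x - y) x = y"
proof (cases "x = y")
  case True then show ?thesis by (simp add: refl3_def)
next
  case False
  have xx: "x \<bullet> x = y \<bullet> y" using assms by (simp add: dot_square_norm)
  have nn: "(x - y) \<bullet> (x - y) = 2 * (x \<bullet> x - x \<bullet> y)"
    using xx by (simp add: inner_diff_left inner_diff_right inner_commute)
  have xn: "x \<bullet> (x - y) = x \<bullet> x - x \<bullet> y" by (simp add: inner_diff_right)
  have D: "(x - y) \<bullet> (x - y) = 2 * (x \<bullet> (x - y))" using nn xn by simp
  have N: "(x - y) \<bullet> (x - y) \<noteq> 0" using False by simp
  have "2 * (x \<bullet> (x - y)) \<noteq> 0" using N unfolding D .
  then have e: "2 * (x \<bullet> (x - y)) / ((x - y) \<bullet> (x - y)) = 1" unfolding D by simp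
  show ?thesis unfolding refl3_def e by simp
qed

lemma refl3_fix: "z \<bullet> n = 0 \<Longrightarrow> refl3 n z = z"
  by (simp add: refl3_def)

lemma pair_transform:
  fixes a1 a2 b1 b2 :: "real^3"
  assumes n: "norm a1 = 1" "norm a2 = 1" "norm b1 = 1" "norm b2 = 1"
    and g: "a1 \<bullet> a2 = b1 \<bullet> b2"
  shows "\<exists>f. orthogonal_transformation f \<and> f a1 = b1 \<and> f a2 = b2"
proof -
  define f1 where "f1 = refl3 (a1 - b1)"
  have o1: "orthogonal_transformation f1" unfolding f1_def by (rule refl3_orth)
  have f1a: "f1 a1 = b1" unfolding f1_def using n by (intro refl3_swap) simp
  define x where "x = f1 a2"
  have nx: "norm x = norm b2" using n orthogonal_transformation_norm[OF o1] by (simp add: x_def)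
  have xb: "b1 \<bullet> x = b1 \<bullet> b2"
  proof -
    have "b1 \<bullet> x = f1 a1 \<bullet> f1 a2" by (simp add: f1a x_def)
    also have "\<dots> = a1 \<bullet> a2" using o1 by (simp add: orthogonal_transformation_def)
    finally show ?thesis using g by simp
  qed
  define f2 where "f2 = refl3 (x - b2)"
  have o2: "orthogonal_transformation f2" unfolding f2_def by (rule refl3_orth)
  have f2x: "f2 x = b2" unfolding f2_def using nx by (rule refl3_swap)
  have f2b: "f2 b1 = b1" unfolding f2_def using xb by (intro refl3_fix) (simp add: inner_diff_right)
  show ?thesis
    using orthogonal_transformation_compose[OF o2 o1] f1a f2b f2x
    by (intro exI[of _ "f2 \<circ> f1"]) (simp add: x_def)
qed

lemma disk_image:
  assumes o: "orthogonal_transformation f"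
  shows "f ` sdisk c r = sdisk (f c) r"
proof -
  have ip: "f x \<bullet> f y = x \<bullet> y" for x y using o by (simp add: orthogonal_transformation_def)
  have nm: "norm (f x) = norm x" for x using orthogonal_transformation_norm[OF o] .
  show ?thesis
  proof (intro set_eqI iffI)
    fix y assume "y \<in> f ` sdisk c r"
    then obtain x where "x \<in> sdisk c r" "y = f x" by auto
    then show "y \<in> sdisk (f c) r" by (auto simp: sdisk_def S2_def sdist_def ip nm)
  next
    fix y assume y: "y \<in> sdisk (f c) r"
    obtain x where x: "y = f x" using orthogonal_transformation_surj[OF o] by (metis surjD)
    then have "x \<in> sdisk c r" using y by (auto simp: sdisk_def S2_def sdist_def ip nm)
    then show "y \<in> f ` sdisk c r" using x by auto
  qed
qed


lemma cross_id:
  fixes a b th :: real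
  shows "cos b - cos a * (cos a * cos b - cos th * sin a * sin b) = sin a * (sin a * cos b + cos a * sin b * cos th)"
proof -
  have "cos a * cos a + sin a * sin a = 1" using sin_cos_squared_add3[of a] by simp
  then have "cos b = cos b * (cos a * cos a) + cos b * (sin a * sin a)"
    by (metis distrib_left mult.right_neutral)
  then show ?thesis by (simp add: algebra_simps)
qed

lemma arccos_k1:
  assumes th: "0 < th" "th < pi" and r: "0 < r1" "r1 < pi/2" "0 < r2" "r2 < pi/2"
    and K: "K = cos r1 * cos r2 - cos th * sin r1 * sin r2"
    and k1: "k1 = (cos r2 - cos r1 * K) / (sin r1 * sqrt (1 - K\<^sup>2))"
  shows "\<bar>K\<bar> < 1" "-1 < k1" "k1 < 1" "arccos k1 = acot (Kc th r1 r2)"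
proof -
  define X where "X = sin r1 * cos r2 + cos r1 * sin r2 * cos th"
  define Y where "Y = sin r2 * sin th"
  have s1: "sin r1 > 0" using r by (intro sin_gt_zero) auto
  have s2: "sin r2 > 0" using r by (intro sin_gt_zero) auto
  have sth: "sin th > 0" using th by (intro sin_gt_zero) auto
  have Yp: "Y > 0" using s2 sth by (simp add: Y_def)
  have id: "X\<^sup>2 + Y\<^sup>2 + K\<^sup>2 = 1" unfolding X_def Y_def K by (rule XYK_identity)
  have Y2: "Y\<^sup>2 > 0" using Yp by simp
  have "K\<^sup>2 < 1" using id Y2 zero_le_power2[of X] by linarith
  then show "\<bar>K\<bar> < 1" by (simp add: abs_square_less_1)
  define R where "R = sqrt (X\<^sup>2 + Y\<^sup>2)"
  have R2: "1 - K\<^sup>2 = X\<^sup>2 + Y\<^sup>2" using id by simp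
  have Rp: "R > 0" using Y2 by (simp add: R_def add_nonneg_pos)
  have cr: "cos r2 - cos r1 * K = sin r1 * X" unfolding K X_def by (rule cross_id)
  have k1X: "k1 = X / R" unfolding k1 cr R2 using s1 by (simp add: R_def)
  have XR: "\<bar>X\<bar> < R"
  proof -
    have "X\<^sup>2 < X\<^sup>2 + Y\<^sup>2" using Y2 by simp
    then have "sqrt (X\<^sup>2) < R" unfolding R_def by (rule real_sqrt_less_mono)
    then show ?thesis by simp
  qed
  then show "-1 < k1" "k1 < 1" using Rp unfolding k1X by (auto simp: field_simps abs_less_iff)
  have KcXY: "Kc th r1 r2 = X / Y" using s2 sth by (simp add: Kc_eq X_def Y_def)
  have "sqrt (1 + (X / Y)\<^sup>2) = R / Y"
  proof -
    have "1 + (X / Y)\<^sup>2 = (X\<^sup>2 + Y\<^sup>2) / Y\<^sup>2" using Yp by (simp add: field_simps power2_eq_square)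
    then show ?thesis using Yp by (simp add: R_def real_sqrt_divide)
  qed
  then have "cos (acot (X / Y)) = X / R" using Yp Rp by (simp add: cos_acot)
  then have "arccos k1 = arccos (cos (acot (X / Y)))" by (simp add: k1X)
  also have "\<dots> = acot (X / Y)" using acot_bounds by (intro arccos_cos) (auto intro: less_imp_le)
  finally show "arccos k1 = acot (Kc th r1 r2)" by (simp add: KcXY)
qed

lemma gram_factor:
  fixes k r1 r2 :: real
  shows "1 - k\<^sup>2 - (cos r1)\<^sup>2 - (cos r2)\<^sup>2 + 2 * k * cos r1 * cos r2
       = (cos (r1 - r2) - k) * (k - cos (r1 + r2))"
proof -
  have e: "(sin r1)\<^sup>2 = 1 - (cos r1)\<^sup>2" "(sin r2)\<^sup>2 = 1 - (cos r2)\<^sup>2" by (simp_all add: sin_squared_eq)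
  have "(cos (r1 - r2) - k) * (k - cos (r1 + r2))
      = - k\<^sup>2 + 2 * k * cos r1 * cos r2 - ((cos r1)\<^sup>2 * (cos r2)\<^sup>2 - (sin r1)\<^sup>2 * (sin r2)\<^sup>2)"
    by (simp add: cos_diff cos_add algebra_simps power2_eq_square)
  also have "\<dots> = 1 - k\<^sup>2 - (cos r1)\<^sup>2 - (cos r2)\<^sup>2 + 2 * k * cos r1 * cos r2"
    unfolding e by (simp add: algebra_simps power2_eq_square)
  finally show ?thesis by simp
qed

lemma gram_pos:
  assumes r: "0 < r1" "r1 < pi/2" "0 < r2" "r2 < pi/2"
    and d: "\<bar>r1 - r2\<bar> < d" "d < r1 + r2"
  shows "1 - (cos d)\<^sup>2 - (cos r1)\<^sup>2 - (cos r2)\<^sup>2 + 2 * cos d * cos r1 * cos r2 > 0"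
proof -
  have "cos d < cos \<bar>r1 - r2\<bar>" using d r by (intro cos_monotone_0_pi) auto
  then have a: "cos (r1 - r2) - cos d > 0" by simp
  have "cos (r1 + r2) < cos d" using d r by (intro cos_monotone_0_pi) auto
  then have b: "cos d - cos (r1 + r2) > 0" by simp
  show ?thesis unfolding gram_factor using a b by simp
qed


definition e1 :: "real^3" where "e1 = axis 1 1"
definition e2 :: "real^3" where "e2 = axis 2 1"
definition qp :: "real \<Rightarrow> real^3" where "qp a = cos a *\<^sub>R e1 + sin a *\<^sub>R e2"

lemma e_inner: "e1 \<bullet> e1 = 1" "e2 \<bullet> e2 = 1" "e1 \<bullet> e2 = 0" "e2 \<bullet> e1 = 0"
  by (simp_all add: e1_def e2_def inner_vec_def sum_3 axis_def)

lemma qp_inner: "qp a \<bullet> qp b = cos (a - b)"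
  by (simp add: qp_def inner_add_left inner_add_right e_inner cos_diff)

lemma qp_S2: "qp a \<in> S2"
proof -
  have "qp a \<bullet> qp a = 1" by (simp add: qp_inner)
  then show ?thesis by (simp add: S2_def norm_eq_sqrt_inner)
qed

lemma qp_sdist: "sdist (qp a) (qp b) = arccos (cos (a - b))"
  by (simp add: sdist_def qp_inner)

lemma arccos_cos_abs: "\<bar>x\<bar> \<le> pi \<Longrightarrow> arccos (cos x) = \<bar>x\<bar>"
  by (metis abs_ge_zero abs_of_nonneg abs_of_nonpos arccos_cos cos_minus nle_le)

lemma corner_inner:
  assumes "c \<in> S2" "p \<in> S2" "sdist c p = r"
  shows "c \<bullet> p = cos r"
  using assms inner_unit_bounds[OF assms(1,2)] by (auto simp: sdist_def)

lemma exists_bigon: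
  assumes th: "0 < th" "th < pi" and r: "0 < r1" "r1 < pi/2" "0 < r2" "r2 < pi/2"
    and T: "Tf th r1 r2 = T1" "Tf th r2 r1 = T2"
  shows "\<exists>c1 r1 c2 r2. is_bigon c1 r1 c2 r2 \<and> bigon_angle c1 r1 c2 r2 th \<and>
            side_total_curvature c1 r1 c2 r2 T1 \<and> side_total_curvature c2 r2 c1 r1 T2"
proof -
  define K where "K = cos r1 * cos r2 - cos th * sin r1 * sin r2"
  have s1: "sin r1 > 0" using r by (intro sin_gt_zero) auto
  have s2: "sin r2 > 0" using r by (intro sin_gt_zero) auto
  have Kb: "\<bar>K\<bar> < 1" using arccos_k1[OF th r K_def refl] by simp
  define d where "d = arccos K"
  have cd: "cos d = K" using Kb by (simp add: d_def)
  have d0: "0 \<le> d" "d \<le> pi" using Kb arccos_bounded[of K] by (auto simp: d_def)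
  have Klo: "cos (r1 + r2) < K"
  proof -
    have "K - cos (r1 + r2) = sin r1 * sin r2 * (1 - cos th)"
      by (simp add: K_def cos_add algebra_simps)
    moreover have "cos th < 1" using th cos_monotone_0_pi[of 0 th] by simp
    ultimately show ?thesis using s1 s2 by (smt (verit) mult_pos_pos)
  qed
  have Khi: "K < cos (r1 - r2)"
  proof -
    have "cos (r1 - r2) - K = sin r1 * sin r2 * (1 + cos th)"
      by (simp add: K_def cos_diff algebra_simps)
    moreover have "cos th > -1" using th cos_monotone_0_pi[of th pi] by simp
    ultimately show ?thesis using s1 s2 by (smt (verit) mult_pos_pos)
  qed
  have dlt: "d < r1 + r2"
  proof (rule ccontr)
    assume "\<not> d < r1 + r2"
    then have "cos d \<le> cos (r1 + r2)" using d0 r by (intro cos_monotone_0_pi_le) auto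
    then show False using cd Klo by simp
  qed
  have dgt: "\<bar>r1 - r2\<bar> < d"
  proof (rule ccontr)
    assume "\<not> \<bar>r1 - r2\<bar> < d"
    then have "cos \<bar>r1 - r2\<bar> \<le> cos d" using d0 r by (intro cos_monotone_0_pi_le) auto
    then show False using cd Khi by simp
  qed
  define c1 where "c1 = qp 0"
  define c2 where "c2 = qp d"
  have S: "c1 \<in> S2" "c2 \<in> S2" by (simp_all add: c1_def c2_def qp_S2)
  have c12: "c1 \<bullet> c2 = K" by (simp add: c1_def c2_def qp_inner cd)
  have inter: "sdisk c1 r1 \<inter> sdisk c2 r2 \<noteq> {}"
  proof -
    define a where "a = d * r1 / (r1 + r2)"
    have a: "0 \<le> a" "a < r1" "d - a < r2" "a \<le> d"
    proof -
      show "0 \<le> a" using d0 r by (simp add: a_def)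
      have rp: "r1 + r2 > 0" using r by simp
      have "d * r1 < (r1 + r2) * r1" by (rule mult_strict_right_mono[OF dlt]) (use r in simp)
      then show "a < r1" using rp by (simp add: a_def divide_less_eq mult.commute)
      have "d - a = d * r2 / (r1 + r2)" using r by (simp add: a_def field_simps)
      moreover have "d * r2 < (r1 + r2) * r2" by (rule mult_strict_right_mono[OF dlt]) (use r in simp)
      ultimately show "d - a < r2" using rp by (simp add: divide_less_eq mult.commute)
      show "a \<le> d" using d0 r by (simp add: a_def field_simps mult_left_le)
    qed
    have "sdist c1 (qp a) = a" unfolding c1_def qp_sdist using a d0 by (simp add: arccos_cos_abs)
    moreover have "sdist c2 (qp a) = d - a" unfolding c2_def qp_sdist using a d0 by (simp add: arccos_cos_abs)
    ultimately have "qp a \<in> sdisk c1 r1 \<inter> sdisk c2 r2" using a qp_S2 by (simp add: sdisk_def)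
    then show ?thesis by blast
  qed
  have n12: "\<not> sdisk c1 r1 \<subseteq> sdisk c2 r2"
  proof -
    define t where "t = max 0 (r2 - d)"
    have t: "0 \<le> t" "t < r1" "r2 \<le> d + t" "d + t \<le> pi" using r dgt dlt d0 by (auto simp: t_def)
    have "sdist c1 (qp (- t)) = t" unfolding c1_def qp_sdist using t r by (simp add: arccos_cos_abs)
    moreover have "sdist c2 (qp (- t)) = d + t" unfolding c2_def qp_sdist using t d0 by (simp add: arccos_cos_abs)
    ultimately have "qp (- t) \<in> sdisk c1 r1" "qp (- t) \<notin> sdisk c2 r2" using t qp_S2 by (auto simp: sdisk_def)
    then show ?thesis by blast
  qed
  have n21: "\<not> sdisk c2 r2 \<subseteq> sdisk c1 r1"
  proof -
    define t where "t = max 0 (r1 - d)"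
    have t: "0 \<le> t" "t < r2" "r1 \<le> d + t" "d + t \<le> pi" using r dgt dlt d0 by (auto simp: t_def)
    have "sdist c1 (qp (d + t)) = d + t" unfolding c1_def qp_sdist using t d0 by (simp add: arccos_cos_abs)
    moreover have "sdist c2 (qp (d + t)) = t" unfolding c2_def qp_sdist using t r by (simp add: arccos_cos_abs)
    ultimately have "qp (d + t) \<in> sdisk c2 r2" "qp (d + t) \<notin> sdisk c1 r1" using t qp_S2 by (auto simp: sdisk_def)
    then show ?thesis by blast
  qed
  have big: "is_bigon c1 r1 c2 r2" unfolding is_bigon_def using S r inter n12 n21 by simp
  have ang: "bigon_angle c1 r1 c2 r2 th"
    unfolding bigon_angle_def
  proof (intro ballI allI impI)
    fix p w1 w2 assume p: "p \<in> bigon_corners c1 r1 c2 r2"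
      and w: "norm w1 = 1 \<and> w1 \<bullet> p = 0 \<and> w1 \<bullet> c1 = 0 \<and> w1 \<bullet> c2 > 0 \<and>
        norm w2 = 1 \<and> w2 \<bullet> p = 0 \<and> w2 \<bullet> c2 = 0 \<and> w2 \<bullet> c1 > 0"
    have pS: "p \<in> S2" and p1: "c1 \<bullet> p = cos r1" and p2: "c2 \<bullet> p = cos r2"
      using p S corner_inner by (auto simp: bigon_corners_def)
    have "w1 \<bullet> w2 = (cos r1 * cos r2 - c1 \<bullet> c2) / (sin r1 * sin r2)"
      using w by (intro angle_formula[OF S pS r p1 p2]) auto
    also have "\<dots> = cos th" using s1 s2 by (simp add: c12 K_def field_simps)
    finally show "arccos (w1 \<bullet> w2) = th" using th by (simp add: arccos_cos)
  qed
  have k12: "\<bar>c1 \<bullet> c2\<bar> < 1" using Kb c12 by simp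
  have r': "0 < r1" "r1 < pi" "0 \<le> r2" "r2 \<le> pi" "0 < r2" "r2 < pi" "0 \<le> r1" "r1 \<le> pi" using r by auto
  define k1 where "k1 = (cos r2 - cos r1 * K) / (sin r1 * sqrt (1 - K\<^sup>2))"
  note A1 = arccos_k1[OF th r K_def k1_def]
  have cv1: "side_total_curvature c1 r1 c2 r2 T1"
    using side_curv_iff[OF S k12 r'(1-4) A1(2,3)] A1(4) T(1)
    by (simp add: c12 k1_def Tf_def)
  define K' where "K' = cos r2 * cos r1 - cos th * sin r2 * sin r1"
  have KK: "K' = K" by (simp add: K'_def K_def algebra_simps)
  define k2 where "k2 = (cos r1 - cos r2 * K') / (sin r2 * sqrt (1 - K'\<^sup>2))"
  note A2 = arccos_k1[OF th r(3,4,1,2) K'_def k2_def]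
  have S': "c2 \<in> S2" "c1 \<in> S2" using S by auto
  have c21: "c2 \<bullet> c1 = K'" using c12 KK by (simp add: inner_commute)
  have k21: "\<bar>c2 \<bullet> c1\<bar> < 1" using k12 by (simp add: inner_commute)
  have cv2: "side_total_curvature c2 r2 c1 r1 T2"
    using side_curv_iff[OF S' k21 r'(5-8) A2(2,3)] A2(4) T(2)
    by (simp add: c21 k2_def Tf_def)
  show ?thesis using big ang cv1 cv2 by blast
qed


lemma bigon_params:
  assumes th: "0 < th" "th < pi"
    and B: "is_bigon c1 r1 c2 r2" and A: "bigon_angle c1 r1 c2 r2 th"
    and C1: "side_total_curvature c1 r1 c2 r2 T1" and C2: "side_total_curvature c2 r2 c1 r1 T2"
  shows "0 < r1" "r1 < pi/2" "0 < r2" "r2 < pi/2"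
    "c1 \<bullet> c2 = cos r1 * cos r2 - cos th * sin r1 * sin r2"
    "Tf th r1 r2 = T1" "Tf th r2 r1 = T2" "norm c1 = 1" "norm c2 = 1"
proof -
  have S: "c1 \<in> S2" "c2 \<in> S2" and r: "0 < r1" "r1 < pi/2" "0 < r2" "r2 < pi/2"
    using B by (auto simp: is_bigon_def)
  then show "0 < r1" "r1 < pi/2" "0 < r2" "r2 < pi/2" "norm c1 = 1" "norm c2 = 1"
    by (auto simp: S2_def)
  have s1: "sin r1 > 0" using r by (intro sin_gt_zero) auto
  have s2: "sin r2 > 0" using r by (intro sin_gt_zero) auto
  define d where "d = sdist c1 c2"
  have d: "\<bar>r1 - r2\<bar> < d" "d < r1 + r2" using bigon_dist[OF B] by (auto simp: d_def)
  define k where "k = c1 \<bullet> c2"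
  have kb: "-1 \<le> k" "k \<le> 1" using inner_unit_bounds[OF S] by (auto simp: k_def)
  have cd: "cos d = k" using kb by (simp add: d_def sdist_def k_def)
  have kk: "\<bar>k\<bar> < 1"
  proof -
    have "cos d < cos 0" using d r by (intro cos_monotone_0_pi) auto
    moreover have "cos pi < cos d" using d r by (intro cos_monotone_0_pi) auto
    ultimately show ?thesis using cd by auto
  qed
  have G: "1 - k\<^sup>2 - (cos r1)\<^sup>2 - (cos r2)\<^sup>2 + 2 * k * cos r1 * cos r2 > 0"
    using gram_pos[OF r d] cd by simp
  obtain p where p: "p \<in> S2" "c1 \<bullet> p = cos r1" "c2 \<bullet> p = cos r2"
    using corner_exists[OF S, of "cos r1" "cos r2"] kk G by (auto simp: k_def)
  have pc: "p \<in> bigon_corners c1 r1 c2 r2"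
    using p r by (simp add: bigon_corners_def sdist_def arccos_cos)
  obtain w1 w2 where w: "norm w1 = 1 \<and> w1 \<bullet> p = 0 \<and> w1 \<bullet> c1 = 0 \<and> w1 \<bullet> c2 > 0 \<and>
                 norm w2 = 1 \<and> w2 \<bullet> p = 0 \<and> w2 \<bullet> c2 = 0 \<and> w2 \<bullet> c1 > 0"
    using angle_witness[OF S p(1) r p(2,3)] G by (auto simp: k_def)
  have ac: "arccos (w1 \<bullet> w2) = th" using A pc w unfolding bigon_angle_def by blast
  have wb: "\<bar>w1 \<bullet> w2\<bar> \<le> 1" using Cauchy_Schwarz_ineq2[of w1 w2] w by simp
  have "cos th = w1 \<bullet> w2" using ac wb by (auto simp: cos_arccos_abs)
  also have "\<dots> = (cos r1 * cos r2 - k) / (sin r1 * sin r2)"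
    using w by (auto simp: k_def intro!: angle_formula[OF S p(1) r p(2,3)])
  finally have kf: "k = cos r1 * cos r2 - cos th * sin r1 * sin r2" using s1 s2
    by (simp add: field_simps)
  then show "c1 \<bullet> c2 = cos r1 * cos r2 - cos th * sin r1 * sin r2" by (simp add: k_def)
  have r': "0 < r1" "r1 < pi" "0 \<le> r2" "r2 \<le> pi" "0 < r2" "r2 < pi" "0 \<le> r1" "r1 \<le> pi" using r by auto
  define k1 where "k1 = (cos r2 - cos r1 * k) / (sin r1 * sqrt (1 - k\<^sup>2))"
  note A1 = arccos_k1[OF th r kf k1_def]
  have k12: "\<bar>c1 \<bullet> c2\<bar> < 1" using kk by (simp add: k_def)
  have "T1 = 2 * cos r1 * arccos k1"
    using side_curv_iff[OF S k12 r'(1-4) A1(2,3)] C1 by (simp add: k1_def k_def)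
  then show "Tf th r1 r2 = T1" using A1(4) by (simp add: Tf_def)
  define k' where "k' = c2 \<bullet> c1"
  have kf': "k' = cos r2 * cos r1 - cos th * sin r2 * sin r1"
    using kf by (simp add: k'_def k_def inner_commute algebra_simps)
  define k2 where "k2 = (cos r1 - cos r2 * k') / (sin r2 * sqrt (1 - k'\<^sup>2))"
  note A2 = arccos_k1[OF th r(3,4,1,2) kf' k2_def]
  have k21: "\<bar>c2 \<bullet> c1\<bar> < 1" using kk by (simp add: k_def inner_commute)
  have "T2 = 2 * cos r2 * arccos k2"
    using side_curv_iff[OF S(2,1) k21 r'(5-8) A2(2,3)] C2 by (simp add: k2_def k'_def)
  then show "Tf th r2 r1 = T2" using A2(4) by (simp add: Tf_def)
qed

theorem lemma3p5:
  fixes \<theta> T1 T2 :: real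
  assumes "0 < \<theta>" and "\<theta> < pi" and "0 < T1" and "0 < T2" and "T1 + T2 < 2 * \<theta>"
  shows "(\<exists>c1 r1 c2 r2. is_bigon c1 r1 c2 r2 \<and> bigon_angle c1 r1 c2 r2 \<theta> \<and>
            side_total_curvature c1 r1 c2 r2 T1 \<and> side_total_curvature c2 r2 c1 r1 T2)
       \<and> (\<forall>a1 s1 a2 s2 b1 t1 b2 t2.
            is_bigon a1 s1 a2 s2 \<and> bigon_angle a1 s1 a2 s2 \<theta> \<and>
            side_total_curvature a1 s1 a2 s2 T1 \<and> side_total_curvature a2 s2 a1 s1 T2 \<and>
            is_bigon b1 t1 b2 t2 \<and> bigon_angle b1 t1 b2 t2 \<theta> \<and>
            side_total_curvature b1 t1 b2 t2 T1 \<and> side_total_curvature b2 t2 b1 t1 T2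
            \<longrightarrow> (\<exists>f. orthogonal_transformation f \<and>
                   f ` sdisk a1 s1 = sdisk b1 t1 \<and> f ` sdisk a2 s2 = sdisk b2 t2))"
proof
  obtain r1 r2 where r: "0 < r1" "r1 < pi/2" "0 < r2" "r2 < pi/2"
      and T: "Tf \<theta> r1 r2 = T1" "Tf \<theta> r2 r1 = T2"
    using Tf_exists[OF assms] by blast
  show "\<exists>c1 r1 c2 r2. is_bigon c1 r1 c2 r2 \<and> bigon_angle c1 r1 c2 r2 \<theta> \<and>
            side_total_curvature c1 r1 c2 r2 T1 \<and> side_total_curvature c2 r2 c1 r1 T2"
    by (rule exists_bigon[OF assms(1,2) r T])
next
  show "\<forall>a1 s1 a2 s2 b1 t1 b2 t2.
            is_bigon a1 s1 a2 s2 \<and> bigon_angle a1 s1 a2 s2 \<theta> \<and>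
            side_total_curvature a1 s1 a2 s2 T1 \<and> side_total_curvature a2 s2 a1 s1 T2 \<and>
            is_bigon b1 t1 b2 t2 \<and> bigon_angle b1 t1 b2 t2 \<theta> \<and>
            side_total_curvature b1 t1 b2 t2 T1 \<and> side_total_curvature b2 t2 b1 t1 T2
            \<longrightarrow> (\<exists>f. orthogonal_transformation f \<and>
                   f ` sdisk a1 s1 = sdisk b1 t1 \<and> f ` sdisk a2 s2 = sdisk b2 t2)"
  proof (intro allI impI)
    fix a1 s1 a2 s2 b1 t1 b2 t2
    assume H: "is_bigon a1 s1 a2 s2 \<and> bigon_angle a1 s1 a2 s2 \<theta> \<and>
            side_total_curvature a1 s1 a2 s2 T1 \<and> side_total_curvature a2 s2 a1 s1 T2 \<and>
            is_bigon b1 t1 b2 t2 \<and> bigon_angle b1 t1 b2 t2 \<theta> \<and>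
            side_total_curvature b1 t1 b2 t2 T1 \<and> side_total_curvature b2 t2 b1 t1 T2"
    have Ha: "is_bigon a1 s1 a2 s2" "bigon_angle a1 s1 a2 s2 \<theta>"
      "side_total_curvature a1 s1 a2 s2 T1" "side_total_curvature a2 s2 a1 s1 T2"
      using H by simp_all
    have Hb: "is_bigon b1 t1 b2 t2" "bigon_angle b1 t1 b2 t2 \<theta>"
      "side_total_curvature b1 t1 b2 t2 T1" "side_total_curvature b2 t2 b1 t1 T2"
      using H by simp_all
    note PA = bigon_params[OF assms(1,2) Ha]
    note PB = bigon_params[OF assms(1,2) Hb]
    have pa: "0 < s1" "s1 < pi/2" "0 < s2" "s2 < pi/2"
      "a1 \<bullet> a2 = cos s1 * cos s2 - cos \<theta> * sin s1 * sin s2"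
      "Tf \<theta> s1 s2 = T1" "Tf \<theta> s2 s1 = T2" "norm a1 = 1" "norm a2 = 1"
      by (rule PA)+
    have pb: "0 < t1" "t1 < pi/2" "0 < t2" "t2 < pi/2"
      "b1 \<bullet> b2 = cos t1 * cos t2 - cos \<theta> * sin t1 * sin t2"
      "Tf \<theta> t1 t2 = T1" "Tf \<theta> t2 t1 = T2" "norm b1 = 1" "norm b2 = 1"
      by (rule PB)+
    have eq: "s1 = t1 \<and> s2 = t2"
      using Tf_unique[OF assms(1,2) pa(1-4) pb(1-4)] pa(6,7) pb(6,7) by simp
    have "a1 \<bullet> a2 = b1 \<bullet> b2" using pa(5) pb(5) eq by simp
    then obtain f where f: "orthogonal_transformation f" "f a1 = b1" "f a2 = b2"
      using pair_transform[OF pa(8,9) pb(8,9)] by blast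
    have "f ` sdisk a1 s1 = sdisk b1 t1" using disk_image[OF f(1)] f(2) eq by simp
    moreover have "f ` sdisk a2 s2 = sdisk b2 t2" using disk_image[OF f(1)] f(3) eq by simp
    ultimately show "\<exists>f. orthogonal_transformation f \<and>
                   f ` sdisk a1 s1 = sdisk b1 t1 \<and> f ` sdisk a2 s2 = sdisk b2 t2"
      using f(1) by blast
  qed
qed


end
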